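(* Let $q\in\mathbb{N}_0$ and let $\nu$ be a charge on $\mathbb{C}$ such that for some $r_0>0$ the integrals $\int_{D(r_0)\cap\mathbb{C}^{\rm up}}\operatorname{Im}\frac1{z^k}d\nu(z)$, $1\le k\le q$, converge, and such that the restriction of $\nu$ to $\mathbb{C}^{\rm up}$ belongs to the convergence class at order of growth $q+1$ near $\infty$. Then the balayage $\nu^{\mathrm{bal}[q]}$ of genus $q$ exists as a charge on $\mathbb{C}$. If moreover $D(r_0)\cap\operatorname{supp}\nu=\varnothing$ for some $r_0>0$, then $|\nu^{\mathrm{bal}[q]}|^{\rm rad}(t)=O(t^{q+1})$ as $t\to0$.
   Context: A charge is a real Borel signed measure on $\mathbb{C}$ finite on bounded sets, $|\nu|$ its total variation, $|\nu|^{\rm rad}(r)=|\nu|(\{|z|\le r\})$, $D(r)=\{|z|<r\}$, $\mathbb{C}^{\rm up}=\{\operatorname{Im}z>0\}$. A charge $\mu$ belongs to the convergence class at order of growth $s$ near $\infty$ if $\int_1^{+\infty}t^{-s}d|\mu|^{\rm rad}(t)<\infty$. For $z\in\mathbb{C}^{\rm up}$ and bounded Borel $B$: $\Omega^{[q]}(z,B)=\frac1\pi\int_{B\cap\mathbb{R}}\operatorname{Im}\frac1{t-z}dt+\frac1\pi\sum_{k=1}^q\operatorname{Im}(z^{-k})\int_{B\cap\mathbb{R}}t^{k-1}dt$; the balayage of genus $q$ from $\mathbb{C}^{\rm up}$ is $\nu^{\mathrm{bal}[q]}(B)=\int_{\mathbb{C}^{\rm up}}\Omega^{[q]}(z,B)d\nu(z)+\nu(B\setminus\mathbb{C}^{\rm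 up})$ (existence meaning the integrals converge and define a charge). *)

theory Defs
  imports "HOL-Analysis.Analysis" "HOL-Library.Landau_Symbols"
begin

text \<open>A charge (real Borel signed measure on the complex plane, finite on bounded sets)
  is represented by its Jordan decomposition: a pair (P, N) of mutually singular
  positive Borel measures on the complex plane, both finite on bounded sets.
  The charge is nu = P - N and its total variation is P + N.\<close>

definition charge :: "complex measure \<Rightarrow> complex measure \<Rightarrow> bool" where
  "charge P N \<longleftrightarrow>
     sets P = sets borel \<and> sets N = sets borel \<and>
     (\<forall>B\<in>sets borel. bounded B \<longrightarrow> emeasure P B < \<infinity> \<and> emeasure N B < \<infinity>) \<and>
     (\<exists>A\<in>sets borel. emeasure P (- A) = 0 \<and> emeasure N A = 0)"

definition charge_val :: "complex measure \<Rightarrow> complex measure \<Rightarrow> complex set \<Rightarrow> real" where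
  "charge_val P N B = measure P B - measure N B"

definition rad_tv :: "complex measure \<Rightarrow> complex measure \<Rightarrow> real \<Rightarrow> real" where
  "rad_tv P N r = measure P (cball 0 r) + measure N (cball 0 r)"

definition Cup :: "complex set" where
  "Cup = {z. Im z > 0}"

definition restr_up :: "complex measure \<Rightarrow> complex measure" where
  "restr_up P = density P (indicator Cup)"

definition convergence_class :: "complex measure \<Rightarrow> complex measure \<Rightarrow> real \<Rightarrow> bool" where
  "convergence_class P N s \<longleftrightarrow>
     (\<integral>\<^sup>+ t. indicator {1..} t * ennreal (t powr (- s)) \<partial>interval_measure (rad_tv P N)) < \<infinity>"

definition charge_support :: "complex measure \<Rightarrow> complex measure \<Rightarrow> complex set" where
  "charge_support P N = {z. \<forall>e>0. emeasure P (ball z e) + emeasure N (ball z e) > 0}"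

definition Omega :: "nat \<Rightarrow> complex \<Rightarrow> complex set \<Rightarrow> real" where
  "Omega q z B =
     (1 / pi) * (LINT t:{t::real. complex_of_real t \<in> B}|lborel. Im (1 / (complex_of_real t - z)))
   + (1 / pi) * (\<Sum>k=1..q. Im (inverse (z ^ k)) *
                   (LINT t:{t::real. complex_of_real t \<in> B}|lborel. t ^ (k - 1)))"

definition is_balayage :: "nat \<Rightarrow> complex measure \<Rightarrow> complex measure \<Rightarrow>
                             complex measure \<Rightarrow> complex measure \<Rightarrow> bool" where
  "is_balayage q P N P' N' \<longleftrightarrow>
     charge P' N' \<and>
     (\<forall>B\<in>sets borel. bounded B \<longrightarrow>
        set_integrable P Cup (\<lambda>z. Omega q z B) \<and>
        set_integrable N Cup (\<lambda>z. Omega q z B) \<and>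
        charge_val P' N' B =
          (LINT z:Cup|P. Omega q z B) - (LINT z:Cup|N. Omega q z B)
          + charge_val P N (B - Cup))"

end

theory Submission
  imports Defs
begin

definition addM :: "'a measure \<Rightarrow> 'a measure \<Rightarrow> 'a measure" where
  "addM M1 M2 = measure_of (space M1) (sets M1) (\<lambda>A. emeasure M1 A + emeasure M2 A)"

lemma sets_addM[simp, measurable_cong]: "sets (addM M1 M2) = sets M1"
  by (simp add: addM_def sets.sigma_sets_eq sets.space_closed)

lemma space_addM[simp]: "space (addM M1 M2) = space M1"
  by (simp add: addM_def sets.space_closed)

lemma emeasure_addM:
  assumes "sets M2 = sets M1" "A \<in> sets M1"
  shows "emeasure (addM M1 M2) A = emeasure M1 A + emeasure M2 A"
  unfolding addM_def
proof (rule emeasure_measure_of_sigma)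
  show "sigma_algebra (space M1) (sets M1)" by (rule sets.sigma_algebra_axioms)
  show "positive (sets M1) (\<lambda>A. emeasure M1 A + emeasure M2 A)" by (simp add: positive_def)
  show "countably_additive (sets M1) (\<lambda>A. emeasure M1 A + emeasure M2 A)"
    unfolding countably_additive_def
  proof (intro allI impI)
    fix F :: "nat \<Rightarrow> 'a set" assume F: "range F \<subseteq> sets M1" "disjoint_family F" "\<Union>(range F) \<in> sets M1"
    have "(\<Sum>i. emeasure M1 (F i) + emeasure M2 (F i)) = (\<Sum>i. emeasure M1 (F i)) + (\<Sum>i. emeasure M2 (F i))"
      by (rule suminf_add[symmetric]) auto
    also have "\<dots> = emeasure M1 (\<Union>i. F i) + emeasure M2 (\<Union>i. F i)"
      using F assms by (simp add: suminf_emeasure)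
    finally show "(\<Sum>i. emeasure M1 (F i) + emeasure M2 (F i)) = emeasure M1 (\<Union>(range F)) + emeasure M2 (\<Union>(range F))" .
  qed
qed (rule assms(2))

lemma sigma_finite_complex:
  fixes M :: "complex measure"
  assumes "sets M = sets borel" "\<And>B. B \<in> sets borel \<Longrightarrow> bounded B \<Longrightarrow> emeasure M B < \<infinity>"
  shows "sigma_finite_measure M"
proof
  show "\<exists>A. countable A \<and> A \<subseteq> sets M \<and> \<Union> A = space M \<and> (\<forall>a\<in>A. emeasure M a \<noteq> \<infinity>)"
  proof (intro exI conjI)
    show "countable (range (\<lambda>n::nat. cball (0::complex) (real n)))" by (rule countable_image) (rule countableI_type)
    show "range (\<lambda>n::nat. cball (0::complex) (real n)) \<subseteq> sets M" unfolding assms(1) by (intro image_subsetI) (rule borel_closed, rule closed_cball)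
    show "\<Union> (range (\<lambda>n::nat. cball (0::complex) (real n))) = space M"
    proof -
      have "\<Union> (range (\<lambda>n::nat. cball (0::complex) (real n))) = UNIV"
      proof (intro set_eqI iffI)
        fix x :: complex
        obtain n :: nat where "norm x \<le> real n" using real_arch_simple by blast
        then show "x \<in> \<Union> (range (\<lambda>n::nat. cball (0::complex) (real n)))" by auto
      qed auto
      then show ?thesis using sets_eq_imp_space_eq[OF assms(1)] by simp
    qed
    show "\<forall>a\<in>range (\<lambda>n::nat. cball (0::complex) (real n)). emeasure M a \<noteq> \<infinity>"
    proof
      fix a assume "a \<in> range (\<lambda>n::nat. cball (0::complex) (real n))"
      then obtain n :: nat where "a = cball 0 (real n)" by blast
      then show "emeasure M a \<noteq> \<infinity>" using assms(2)[of a] by auto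
    qed
  qed
qed

lemma ennreal_diff_add_max: "(a - b) + b = max a (b::ennreal)"
  by (cases a; cases b) (auto simp: max_def ennreal_minus ennreal_plus[symmetric] top_unique intro!: ennreal_neg simp del: ennreal_plus)

lemma jordan_exists:
  fixes M1 M2 :: "complex measure"
  assumes s1: "sets M1 = sets borel" and s2: "sets M2 = sets borel"
    and f1: "\<And>B. B \<in> sets borel \<Longrightarrow> bounded B \<Longrightarrow> emeasure M1 B < \<infinity>"
    and f2: "\<And>B. B \<in> sets borel \<Longrightarrow> bounded B \<Longrightarrow> emeasure M2 B < \<infinity>"
  shows "\<exists>P' N'. charge P' N' \<and>
     (\<forall>B\<in>sets borel. bounded B \<longrightarrow> charge_val P' N' B = measure M1 B - measure M2 B)"
proof -
  define \<mu> where "\<mu> = addM M1 M2"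
  have sm: "sets \<mu> = sets borel" using s1 by (simp add: \<mu>_def)
  have em: "emeasure \<mu> B = emeasure M1 B + emeasure M2 B" if "B \<in> sets borel" for B
    unfolding \<mu>_def using s1 s2 that by (intro emeasure_addM) auto
  interpret sigma_finite_measure \<mu>
    apply (rule sigma_finite_complex[OF sm]) using f1 f2 by (auto simp: em)
  have "absolutely_continuous \<mu> M1"
    unfolding absolutely_continuous_def using em sm s1 by (auto simp: null_sets_def)
  from Radon_Nikodym[OF this] s1 sm obtain h1 where h1: "h1 \<in> borel_measurable \<mu>" "density \<mu> h1 = M1"
    by auto
  have "absolutely_continuous \<mu> M2"
    unfolding absolutely_continuous_def using em sm s2 by (auto simp: null_sets_def)
  from Radon_Nikodym[OF this] s2 sm obtain h2 where h2: "h2 \<in> borel_measurable \<mu>" "density \<mu> h2 = M2"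
    by auto
  have h1b[measurable]: "h1 \<in> borel_measurable borel" using h1(1) unfolding measurable_cong_sets[OF sm refl] .
  have h2b[measurable]: "h2 \<in> borel_measurable borel" using h2(1) unfolding measurable_cong_sets[OF sm refl] .
  define d1 where "d1 z = (if h2 z \<le> h1 z then h1 z - h2 z else 0)" for z
  define d2 where "d2 z = (if h1 z < h2 z then h2 z - h1 z else 0)" for z
  have [measurable]: "d1 \<in> borel_measurable borel" "d2 \<in> borel_measurable borel"
    unfolding d1_def[abs_def] d2_def[abs_def] by measurable
  have dm: "d1 \<in> borel_measurable \<mu>" "d2 \<in> borel_measurable \<mu>"
    unfolding measurable_cong_sets[OF sm refl] by auto
  have dmax1: "d1 z + h2 z = max (h1 z) (h2 z)" for z
    unfolding d1_def using ennreal_diff_add_max[of "h1 z" "h2 z"] by (auto simp: max_def)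
  have dmax2: "d2 z + h1 z = max (h1 z) (h2 z)" for z
    unfolding d2_def using ennreal_diff_add_max[of "h2 z" "h1 z"] by (auto simp: max_def)
  define P' where "P' = density \<mu> d1"
  define N' where "N' = density \<mu> d2"
  have sP: "sets P' = sets borel" and sN: "sets N' = sets borel" using sm by (auto simp: P'_def N'_def)
  have eq: "emeasure P' B + emeasure M2 B = emeasure N' B + emeasure M1 B" 
    and le: "emeasure P' B \<le> emeasure M1 B + emeasure M2 B" "emeasure N' B \<le> emeasure M1 B + emeasure M2 B"
    if B: "B \<in> sets borel" for B
  proof -
    have B': "B \<in> sets \<mu>" using B sm by simp
    have e1: "emeasure M1 B = (\<integral>\<^sup>+ z. h1 z * indicator B z \<partial>\<mu>)"
      unfolding h1(2)[symmetric] using h1(1) B' by (rule emeasure_density)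
    have e2: "emeasure M2 B = (\<integral>\<^sup>+ z. h2 z * indicator B z \<partial>\<mu>)"
      unfolding h2(2)[symmetric] using h2(1) B' by (rule emeasure_density)
    have eP: "emeasure P' B = (\<integral>\<^sup>+ z. d1 z * indicator B z \<partial>\<mu>)"
      unfolding P'_def using B' by (subst emeasure_density) (auto simp: sm dm)
    have eN: "emeasure N' B = (\<integral>\<^sup>+ z. d2 z * indicator B z \<partial>\<mu>)"
      unfolding N'_def using B' by (subst emeasure_density) (auto simp: sm dm)
    have "emeasure P' B + emeasure M2 B = (\<integral>\<^sup>+ z. (d1 z * indicator B z + h2 z * indicator B z) \<partial>\<mu>)"
      unfolding eP e2 using B' sm by (subst nn_integral_add) auto
    also have "\<dots> = (\<integral>\<^sup>+ z. max (h1 z) (h2 z) * indicator B z \<partial>\<mu>)"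
      by (intro nn_integral_cong) (simp only: distrib_right[symmetric] dmax1)
    finally have a: "emeasure P' B + emeasure M2 B = (\<integral>\<^sup>+ z. max (h1 z) (h2 z) * indicator B z \<partial>\<mu>)" .
    have "emeasure N' B + emeasure M1 B = (\<integral>\<^sup>+ z. (d2 z * indicator B z + h1 z * indicator B z) \<partial>\<mu>)"
      unfolding eN e1 using B' sm by (subst nn_integral_add) auto
    also have "\<dots> = (\<integral>\<^sup>+ z. max (h1 z) (h2 z) * indicator B z \<partial>\<mu>)"
      by (intro nn_integral_cong) (simp only: distrib_right[symmetric] dmax2)
    finally have b: "emeasure N' B + emeasure M1 B = (\<integral>\<^sup>+ z. max (h1 z) (h2 z) * indicator B z \<partial>\<mu>)" .
    have c: "(\<integral>\<^sup>+ z. max (h1 z) (h2 z) * indicator B z \<partial>\<mu>) \<le> emeasure M1 B + emeasure M2 B"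
    proof -
      have "(\<integral>\<^sup>+ z. max (h1 z) (h2 z) * indicator B z \<partial>\<mu>) \<le> (\<integral>\<^sup>+ z. (h1 z * indicator B z + h2 z * indicator B z) \<partial>\<mu>)"
        by (intro nn_integral_mono) (auto simp: indicator_def)
      also have "\<dots> = emeasure M1 B + emeasure M2 B"
        unfolding e1 e2 using B' sm by (subst nn_integral_add) auto
      finally show ?thesis .
    qed
    show "emeasure P' B + emeasure M2 B = emeasure N' B + emeasure M1 B" using a b by simp
    have "emeasure P' B \<le> emeasure P' B + emeasure M2 B" by (rule add_increasing2) auto
    then show "emeasure P' B \<le> emeasure M1 B + emeasure M2 B"
      using a c by order
    have "emeasure N' B \<le> emeasure N' B + emeasure M1 B" by (rule add_increasing2) auto
    then show "emeasure N' B \<le> emeasure M1 B + emeasure M2 B"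
      using b c by order
  qed
  have fin12: "emeasure M1 B + emeasure M2 B < \<infinity>" if "B \<in> sets borel" "bounded B" for B
    using f1[OF that] f2[OF that] by (simp add: ennreal_add_less_top)
  have finP: "emeasure P' B < \<infinity>" if "B \<in> sets borel" "bounded B" for B
    using le(1)[OF that(1)] fin12[OF that] by (rule le_less_trans)
  have finN: "emeasure N' B < \<infinity>" if "B \<in> sets borel" "bounded B" for B
    using le(2)[OF that(1)] fin12[OF that] by (rule le_less_trans)
  define A where "A = {z. h2 z \<le> h1 z}"
  have A: "A \<in> sets borel" unfolding A_def by measurable
  have PA: "emeasure P' (- A) = 0"
  proof -
    have "emeasure P' (- A) = (\<integral>\<^sup>+ z. d1 z * indicator (- A) z \<partial>\<mu>)"
      unfolding P'_def using A by (subst emeasure_density) (auto simp: sm dm)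
    also have "\<dots> = (\<integral>\<^sup>+ z. 0 \<partial>\<mu>)"
      by (intro nn_integral_cong) (auto simp: A_def indicator_def d1_def d2_def)
    finally show ?thesis by simp
  qed
  have NA: "emeasure N' A = 0"
  proof -
    have "emeasure N' A = (\<integral>\<^sup>+ z. d2 z * indicator A z \<partial>\<mu>)"
      unfolding N'_def using A by (subst emeasure_density) (auto simp: sm dm)
    also have "\<dots> = (\<integral>\<^sup>+ z. 0 \<partial>\<mu>)"
      by (intro nn_integral_cong) (auto simp: A_def indicator_def d1_def d2_def)
    finally show ?thesis by simp
  qed
  have fPN: "\<forall>B\<in>sets borel. bounded B \<longrightarrow> emeasure P' B < \<infinity> \<and> emeasure N' B < \<infinity>"
    using finP finN by blast
  have ch: "charge P' N'"
    unfolding charge_def using sP sN fPN A PA NA by blast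
  show ?thesis
  proof (intro exI conjI ballI impI, fact ch)
    fix B :: "complex set" assume B: "B \<in> sets borel" "bounded B"
    have a1: "emeasure P' B = ennreal (measure P' B)"
      by (rule emeasure_eq_ennreal_measure) (use finP[OF B] in auto)
    have a2: "emeasure N' B = ennreal (measure N' B)"
      by (rule emeasure_eq_ennreal_measure) (use finN[OF B] in auto)
    have a3: "emeasure M1 B = ennreal (measure M1 B)"
      by (rule emeasure_eq_ennreal_measure) (use f1[OF B] in auto)
    have a4: "emeasure M2 B = ennreal (measure M2 B)"
      by (rule emeasure_eq_ennreal_measure) (use f2[OF B] in auto)
    have "ennreal (measure P' B + measure M2 B) = ennreal (measure N' B + measure M1 B)"
      using eq[OF B(1)] unfolding a1 a2 a3 a4 by (simp add: ennreal_plus[symmetric] del: ennreal_plus)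
    then have "measure P' B + measure M2 B = measure N' B + measure M1 B"
      by (subst (asm) ennreal_inj) auto
    then show "charge_val P' N' B = measure M1 B - measure M2 B"
      unfolding charge_val_def by linarith
  qed
qed

definition w :: "nat \<Rightarrow> complex \<Rightarrow> real \<Rightarrow> real" where
  "w q z t = (1/pi) * (Im (1 / (complex_of_real t - z)) + (\<Sum>k=1..q. Im (inverse (z ^ k)) * t ^ (k - 1)))"

lemma kernel_closed:
  fixes z :: complex and t :: real
  assumes "z \<noteq> 0" "complex_of_real t \<noteq> z"
  shows "1 / (complex_of_real t - z) + (\<Sum>k=1..q. inverse (z ^ k) * complex_of_real t ^ (k - 1))
         = complex_of_real t ^ q / (z ^ q * (complex_of_real t - z))"
proof (induction q)
  case 0
  then show ?case by simp
next
  case (Suc q)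
  have d: "complex_of_real t - z \<noteq> 0" using assms by simp
  have "1 / (complex_of_real t - z) + (\<Sum>k=1..Suc q. inverse (z ^ k) * complex_of_real t ^ (k - 1))
      = complex_of_real t ^ q / (z ^ q * (complex_of_real t - z)) + inverse (z ^ Suc q) * complex_of_real t ^ q"
    using Suc by (simp add: add.assoc)
  also have "\<dots> = complex_of_real t ^ Suc q / (z ^ Suc q * (complex_of_real t - z))"
    using assms d by (simp add: field_simps)
  finally show ?case .
qed

lemma w_closed:
  assumes "z \<noteq> 0" "complex_of_real t \<noteq> z"
  shows "w q z t = (1/pi) * Im (complex_of_real t ^ q / (z ^ q * (complex_of_real t - z)))"
proof -
  have "Im (1 / (complex_of_real t - z) + (\<Sum>k=1..q. inverse (z ^ k) * complex_of_real t ^ (k - 1)))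
     = Im (1 / (complex_of_real t - z)) + (\<Sum>k=1..q. Im (inverse (z ^ k)) * t ^ (k - 1))"
    by (simp add: Im_sum flip: of_real_power)
  then show ?thesis unfolding w_def kernel_closed[OF assms] by simp
qed

lemma w_far:
  assumes "z \<noteq> 0" "\<bar>t\<bar> \<le> norm z / 2"
  shows "\<bar>w q z t\<bar> \<le> 2 / pi * \<bar>t\<bar> ^ q / norm z ^ (q + 1)"
proof -
  have nz: "norm z / 2 \<le> norm (complex_of_real t - z)"
    using norm_triangle_ineq2[of z "complex_of_real t"] assms(2) by (simp add: norm_minus_commute)
  have ne: "complex_of_real t \<noteq> z" using assms nz by auto
  have pos: "0 < norm z" using assms by simp
  have "\<bar>w q z t\<bar> = (1/pi) * \<bar>Im (complex_of_real t ^ q / (z ^ q * (complex_of_real t - z)))\<bar>"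
    unfolding w_closed[OF assms(1) ne] by (simp add: abs_mult)
  also have "\<dots> \<le> (1/pi) * norm (complex_of_real t ^ q / (z ^ q * (complex_of_real t - z)))"
    by (intro mult_left_mono abs_Im_le_cmod) auto
  also have "norm (complex_of_real t ^ q / (z ^ q * (complex_of_real t - z))) = \<bar>t\<bar> ^ q / (norm z ^ q * norm (complex_of_real t - z))"
    by (simp add: norm_divide norm_mult norm_power)
  also have "\<dots> \<le> \<bar>t\<bar> ^ q / (norm z ^ q * (norm z / 2))"
    using pos nz by (intro divide_left_mono mult_left_mono mult_pos_pos) auto
  also have "\<dots> = 2 * \<bar>t\<bar> ^ q / norm z ^ (q + 1)"
    using pos by (simp add: field_simps)
  finally show ?thesis by (simp add: field_simps)
qed

lemma Im_inv_diff:
  fixes z :: complex and t :: real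
  shows "Im (1 / (complex_of_real t - z)) = Im z / ((t - Re z)^2 + (Im z)^2)"
  by (simp add: Im_divide power2_eq_square complex_norm_square algebra_simps)

lemma w_near:
  assumes "Im z > 0" "\<bar>t\<bar> \<le> R"
  shows "\<bar>w q z t\<bar> \<le> (1/pi) * (Im z / ((t - Re z)^2 + (Im z)^2) + (\<Sum>k=1..q. \<bar>Im (inverse (z ^ k))\<bar> * R ^ (k - 1)))"
proof -
  define A where "A = Im (1 / (complex_of_real t - z))"
  define S where "S = (\<Sum>k=1..q. Im (inverse (z ^ k)) * t ^ (k - 1))"
  define T where "T = (\<Sum>k=1..q. \<bar>Im (inverse (z ^ k))\<bar> * R ^ (k - 1))"
  have wA: "w q z t = (1/pi) * (A + S)" by (simp only: w_def A_def S_def)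
  have A: "A = Im z / ((t - Re z)^2 + (Im z)^2)" by (simp only: A_def Im_inv_diff)
  have A0: "0 \<le> A" unfolding A using assms by simp
  have "\<bar>S\<bar> \<le> (\<Sum>k=1..q. \<bar>Im (inverse (z ^ k)) * t ^ (k - 1)\<bar>)"
    unfolding S_def by (rule sum_abs)
  also have "\<dots> \<le> T"
    unfolding T_def
  proof (intro sum_mono)
    fix k show "\<bar>Im (inverse (z ^ k)) * t ^ (k - 1)\<bar> \<le> \<bar>Im (inverse (z ^ k))\<bar> * R ^ (k - 1)"
      unfolding abs_mult power_abs by (intro mult_left_mono power_mono) (use assms(2) in auto)
  qed
  finally have ST: "\<bar>S\<bar> \<le> T" .
  have "\<bar>w q z t\<bar> = (1/pi) * \<bar>A + S\<bar>" unfolding wA by (simp add: abs_mult)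
  also have "\<dots> \<le> (1/pi) * (A + T)"
    using ST A0 by (intro mult_left_mono) auto
  finally show ?thesis unfolding A T_def .
qed

lemma poisson_bound:
  assumes "Im z > 0" "0 \<le> R"
  shows "(\<integral>\<^sup>+t. ennreal (Im z / ((t - Re z)^2 + (Im z)^2)) * indicator {-R..R} t \<partial>lborel) \<le> ennreal pi"
proof -
  define x where "x = Re z"
  define y where "y = Im z"
  have y: "y > 0" using assms by (simp add: y_def)
  have "(\<integral>\<^sup>+t. ennreal (y / ((t - x)^2 + y^2)) * indicator {-R..R} t \<partial>lborel)
        = ennreal (arctan ((R - x) / y) - arctan ((-R - x) / y))"
  proof (rule nn_integral_FTC_Icc)
    show "(\<lambda>t. y / ((t - x)^2 + y^2)) \<in> borel_measurable borel" by measurable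
    show "((\<lambda>t. arctan ((t - x) / y)) has_real_derivative y / ((t - x)^2 + y^2)) (at t)" for t
    proof -
      have "((\<lambda>t. arctan ((t - x) / y)) has_real_derivative (1 / (1 + ((t - x) / y)^2)) * (1 / y)) (at t)"
        using y by (auto intro!: derivative_eq_intros simp: field_simps)
      moreover have "(1 / (1 + ((t - x) / y)^2)) * (1 / y) = y / ((t - x)^2 + y^2)"
        using y by (simp add: field_simps power2_eq_square)
      ultimately show ?thesis by simp
    qed
    show "0 \<le> y / ((t - x)^2 + y^2)" for t using y by simp
  qed (use assms in auto)
  also have "\<dots> \<le> ennreal pi"
    using arctan_bounded[of "(R - x) / y"] arctan_bounded[of "(-R - x) / y"]
    by (intro ennreal_leI) linarith
  finally show ?thesis by (simp add: x_def y_def)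
qed

lemma inner_near:
  assumes z: "Im z > 0" and R: "R > 0"
  shows "(\<integral>\<^sup>+t. ennreal (indicator {-R..R} t * \<bar>w q z t\<bar>) \<partial>lborel)
           \<le> ennreal (1 + 2/pi * (\<Sum>k=1..q. \<bar>Im (inverse (z^k))\<bar> * R^k))"
proof -
  define Pz where "Pz t = Im z / ((t - Re z)^2 + (Im z)^2)" for t
  define T where "T = (\<Sum>k=1..q. \<bar>Im (inverse (z ^ k))\<bar> * R ^ (k - 1))"
  have Pz0: "0 \<le> Pz t" for t using z by (simp add: Pz_def)
  have T0: "0 \<le> T" unfolding T_def using R by (intro sum_nonneg) auto
  have [measurable]: "Pz \<in> borel_measurable borel" unfolding Pz_def[abs_def] by measurable
  have "(\<integral>\<^sup>+t. ennreal (indicator {-R..R} t * \<bar>w q z t\<bar>) \<partial>lborel)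
     \<le> (\<integral>\<^sup>+t. ennreal (1/pi) * (ennreal (Pz t) * indicator {-R..R} t) + ennreal (T / pi) * indicator {-R..R} t \<partial>lborel)"
  proof (intro nn_integral_mono)
    fix t :: real
    show "ennreal (indicator {-R..R} t * \<bar>w q z t\<bar>)
          \<le> ennreal (1/pi) * (ennreal (Pz t) * indicator {-R..R} t) + ennreal (T / pi) * indicator {-R..R} t"
    proof (cases "t \<in> {-R..R}")
      case True
      then have "\<bar>t\<bar> \<le> R" by auto
      from w_near[OF z this, of q] have "\<bar>w q z t\<bar> \<le> (1/pi) * (Pz t + T)"
        unfolding Pz_def T_def .
      also have "(1/pi) * (Pz t + T) = (1/pi) * Pz t + T / pi" by (simp add: field_simps)
      finally have "\<bar>w q z t\<bar> \<le> (1/pi) * Pz t + T / pi" .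
      then have "ennreal \<bar>w q z t\<bar> \<le> ennreal ((1/pi) * Pz t + T / pi)" by (rule ennreal_leI)
      also have "\<dots> = ennreal ((1/pi) * Pz t) + ennreal (T / pi)"
        by (rule ennreal_plus) (use Pz0[of t] T0 in auto)
      also have "ennreal ((1/pi) * Pz t) = ennreal (1/pi) * ennreal (Pz t)"
        by (rule ennreal_mult) (use Pz0[of t] in auto)
      finally show ?thesis using True by simp
    qed simp
  qed
  also have "\<dots> = ennreal (1/pi) * (\<integral>\<^sup>+t. ennreal (Pz t) * indicator {-R..R} t \<partial>lborel) + ennreal (T / pi) * emeasure lborel {-R..R}"
    by (simp add: nn_integral_add nn_integral_cmult)
  also have "\<dots> \<le> ennreal (1/pi) * ennreal pi + ennreal (T / pi) * ennreal (2 * R)"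
    using poisson_bound[OF z, of R] R unfolding Pz_def by (intro add_mono mult_left_mono) auto
  also have "\<dots> = ennreal 1 + ennreal (T / pi * (2 * R))"
    using T0 R by (simp add: ennreal_mult[symmetric])
  also have "\<dots> = ennreal (1 + T / pi * (2 * R))"
    by (rule ennreal_plus[symmetric]) (use T0 R in auto)
  also have "T / pi * (2 * R) = 2/pi * (\<Sum>k=1..q. \<bar>Im (inverse (z^k))\<bar> * R^k)"
  proof -
    have "T * R = (\<Sum>k=1..q. \<bar>Im (inverse (z^k))\<bar> * R^k)"
      unfolding T_def sum_distrib_right
    proof (intro sum.cong refl)
      fix k assume "k \<in> {1..q}"
      then have "R ^ (k - 1) * R = R ^ k" by (cases k) auto
      then show "\<bar>Im (inverse (z ^ k))\<bar> * R ^ (k - 1) * R = \<bar>Im (inverse (z ^ k))\<bar> * R ^ k"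
        by (simp add: mult.assoc)
    qed
    then show ?thesis by (simp add: field_simps)
  qed
  finally show ?thesis .
qed

lemma inner_far:
  assumes z: "z \<noteq> 0" and R: "R > 0" and zR: "2 * R \<le> norm z"
  shows "(\<integral>\<^sup>+t. ennreal (indicator {-R..R} t * \<bar>w q z t\<bar>) \<partial>lborel)
           \<le> ennreal (4/pi * R^(q+1) / norm z^(q+1))"
proof -
  define c where "c = 2/pi * R^q / norm z^(q+1)"
  have c0: "0 \<le> c" unfolding c_def using R by simp
  have "(\<integral>\<^sup>+t. ennreal (indicator {-R..R} t * \<bar>w q z t\<bar>) \<partial>lborel)
     \<le> (\<integral>\<^sup>+t. ennreal c * indicator {-R..R} t \<partial>lborel)"
  proof (intro nn_integral_mono)
    fix t :: real
    show "ennreal (indicator {-R..R} t * \<bar>w q z t\<bar>) \<le> ennreal c * indicator {-R..R} t"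
    proof (cases "t \<in> {-R..R}")
      case True
      then have tR: "\<bar>t\<bar> \<le> R" by auto
      then have "\<bar>t\<bar> \<le> norm z / 2" using zR by simp
      from w_far[OF z this, of q] have "\<bar>w q z t\<bar> \<le> 2 / pi * \<bar>t\<bar> ^ q / norm z ^ (q + 1)" .
      also have "\<dots> \<le> c" unfolding c_def using tR z
        by (intro divide_right_mono mult_left_mono power_mono) auto
      finally show ?thesis using True by (simp add: ennreal_leI)
    qed simp
  qed
  also have "\<dots> = ennreal c * ennreal (2 * R)" using R by (simp add: nn_integral_cmult)
  also have "\<dots> = ennreal (4/pi * R^(q+1) / norm z^(q+1))"
    using c0 R by (simp add: ennreal_mult[symmetric] c_def field_simps del: ennreal_mult)
  finally show ?thesis .
qed

definition G :: "nat \<Rightarrow> real \<Rightarrow> complex \<Rightarrow> real" where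
  "G q R z = (if 2 * R \<le> norm z then 4/pi * R^(q+1) / norm z^(q+1)
              else 1 + 2/pi * (\<Sum>k=1..q. \<bar>Im (inverse (z^k))\<bar> * R^k))"

lemma inner_bound:
  assumes "Im z > 0" "R > 0"
  shows "(\<integral>\<^sup>+t. ennreal (indicator {-R..R} t * \<bar>w q z t\<bar>) \<partial>lborel) \<le> ennreal (G q R z)"
proof (cases "2 * R \<le> norm z")
  case True
  have "z \<noteq> 0" using assms by auto
  then show ?thesis using inner_far[OF _ assms(2) True] True by (simp add: G_def)
next
  case False
  then show ?thesis using inner_near[OF assms] by (simp add: G_def)
qed

lemma Cup_borel[measurable]: "Cup \<in> sets borel"
  unfolding Cup_def by measurable

lemma sets_restr_up[simp, measurable_cong]: "sets (restr_up P) = sets P"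
  by (simp add: restr_up_def)

lemma emeasure_restr_up:
  assumes "sets P = sets borel" "B \<in> sets borel"
  shows "emeasure (restr_up P) B = emeasure P (B \<inter> Cup)"
proof -
  have m: "indicator Cup \<in> borel_measurable P"
    unfolding measurable_cong_sets[OF assms(1) refl] by measurable
  have B: "B \<in> sets P" using assms by simp
  have "emeasure (restr_up P) B = (\<integral>\<^sup>+ x. indicator Cup x * indicator B x \<partial>P)"
    unfolding restr_up_def by (rule emeasure_density[OF m B])
  also have "\<dots> = (\<integral>\<^sup>+ x. indicator (B \<inter> Cup) x \<partial>P)"
    by (intro nn_integral_cong) (auto simp: indicator_def)
  also have "\<dots> = emeasure P (B \<inter> Cup)"
    using assms by (intro nn_integral_indicator) auto
  finally show ?thesis .
qed

lemma cball_borel_c[measurable]: "cball (0::complex) r \<in> sets borel"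
  by (rule borel_closed) (rule closed_cball)

lemma rad_tv_right_cont:
  fixes M :: "complex measure"
  assumes sM: "sets M = sets borel" and fM: "\<And>r. emeasure M (cball 0 r) < \<infinity>"
  shows "((\<lambda>r. measure M (cball 0 r)) \<longlongrightarrow> measure M (cball 0 a)) (at_right a)"
proof (rule tendsto_at_right_sequentially[of a "a + 1"])
  fix S :: "nat \<Rightarrow> real"
  assume S: "\<And>n. a < S n" "decseq S" "S \<longlonglongrightarrow> a"
  have r: "range (\<lambda>n. cball (0::complex) (S n)) \<subseteq> sets M" unfolding sM by (intro image_subsetI) (rule cball_borel_c)
  have d: "decseq (\<lambda>n. cball (0::complex) (S n))"
    using S(2) unfolding decseq_def by (meson cball_subset_cball_iff order_refl subsetD order_trans)
  have I: "(\<Inter>n. cball (0::complex) (S n)) = cball 0 a"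
  proof (intro set_eqI iffI)
    fix x assume "x \<in> (\<Inter>n. cball (0::complex) (S n))"
    then have "\<And>n. norm x \<le> S n" by auto
    then show "x \<in> cball 0 a" using LIMSEQ_le_const[OF S(3), of "norm x"] by auto
  next
    fix x assume "x \<in> cball (0::complex) a"
    then show "x \<in> (\<Inter>n. cball (0::complex) (S n))" using S(1) by (auto intro: order_trans less_imp_le)
  qed
  show "(\<lambda>n. measure M (cball 0 (S n))) \<longlonglongrightarrow> measure M (cball 0 a)"
  proof -
    have "emeasure M (cball 0 (S i)) \<noteq> \<infinity>" for i using fM[of "S i"] by auto
    then show ?thesis using Lim_measure_decseq[OF r d] unfolding I by blast
  qed
qed simp

lemma conv_nn:
  fixes P N :: "complex measure"
  assumes sP: "sets P = sets borel" and sN: "sets N = sets borel"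
    and fP: "\<And>B. B \<in> sets borel \<Longrightarrow> bounded B \<Longrightarrow> emeasure P B < \<infinity>"
    and fN: "\<And>B. B \<in> sets borel \<Longrightarrow> bounded B \<Longrightarrow> emeasure N B < \<infinity>"
    and conv: "convergence_class (restr_up P) (restr_up N) s"
  shows "(\<integral>\<^sup>+ z. indicator Cup z * (indicator {1..} (norm z) * ennreal (norm z powr - s)) \<partial>P) < \<infinity>"
proof -
  define PU where "PU = restr_up P"
  define NU where "NU = restr_up N"
  have sPU: "sets PU = sets borel" and sNU: "sets NU = sets borel" using sP sN by (auto simp: PU_def NU_def)
  have ePU: "emeasure PU B = emeasure P (B \<inter> Cup)" if "B \<in> sets borel" for B
    unfolding PU_def using emeasure_restr_up[OF sP that] .
  have eNU: "emeasure NU B = emeasure N (B \<inter> Cup)" if "B \<in> sets borel" for B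
    unfolding NU_def using emeasure_restr_up[OF sN that] .
  have fPU: "emeasure PU B < \<infinity>" if "B \<in> sets borel" "bounded B" for B
  proof -
    have "emeasure PU B = emeasure P (B \<inter> Cup)" using ePU that by simp
    also have "\<dots> < \<infinity>" using fP[of "B \<inter> Cup"] that bounded_Int by auto
    finally show ?thesis .
  qed
  have fNU: "emeasure NU B < \<infinity>" if "B \<in> sets borel" "bounded B" for B
  proof -
    have "emeasure NU B = emeasure N (B \<inter> Cup)" using eNU that by simp
    also have "\<dots> < \<infinity>" using fN[of "B \<inter> Cup"] that bounded_Int by auto
    finally show ?thesis .
  qed
  define Q where "Q = addM PU NU"
  have sQ: "sets Q = sets borel" using sPU by (simp add: Q_def)
  have eQ: "emeasure Q B = emeasure PU B + emeasure NU B" if "B \<in> sets borel" for B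
    unfolding Q_def using sPU sNU that by (intro emeasure_addM) auto
  define F where "F = rad_tv PU NU"
  have F: "F r = measure PU (cball 0 r) + measure NU (cball 0 r)" for r
    by (simp add: F_def rad_tv_def)
  have cbP: "cball 0 r \<in> sets PU" for r unfolding sPU by (rule cball_borel_c)
  have cbN: "cball 0 r \<in> sets NU" for r unfolding sNU by (rule cball_borel_c)
  have fmP: "cball 0 r \<in> fmeasurable PU" for r
    unfolding fmeasurable_def using cbP fPU[OF cball_borel_c bounded_cball] by blast
  have fmN: "cball 0 r \<in> fmeasurable NU" for r
    unfolding fmeasurable_def using cbN fNU[OF cball_borel_c bounded_cball] by blast
  have mP: "measure PU (cball 0 x) \<le> measure PU (cball 0 y)" if "x \<le> y" for x y
    by (rule measure_mono_fmeasurable[OF _ cbP fmP]) (use that in auto)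
  have mN: "measure NU (cball 0 x) \<le> measure NU (cball 0 y)" if "x \<le> y" for x y
    by (rule measure_mono_fmeasurable[OF _ cbN fmN]) (use that in auto)
  have monoF: "F x \<le> F y" if "x \<le> y" for x y
    unfolding F using mP[OF that] mN[OF that] by simp
  have rcF: "continuous (at_right a) F" for a
  proof -
    have "((\<lambda>r. measure PU (cball 0 r) + measure NU (cball 0 r)) \<longlongrightarrow> measure PU (cball 0 a) + measure NU (cball 0 a)) (at_right a)"
      by (intro tendsto_add rad_tv_right_cont) (use sPU sNU fPU fNU in auto)
    then show ?thesis unfolding continuous_within F[abs_def] by simp
  qed
  have Ediff: "emeasure Q {z. a < norm z \<and> norm z \<le> b} = ennreal (F b - F a)" if "a \<le> b" for a b
  proof -
    have set: "{z::complex. a < norm z \<and> norm z \<le> b} = cball 0 b - cball 0 a" by auto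
    have dP: "emeasure PU (cball 0 b - cball 0 a) = ennreal (measure PU (cball 0 b) - measure PU (cball 0 a))"
    proof -
      have "emeasure PU (cball 0 b - cball 0 a) = ennreal (measure PU (cball 0 b - cball 0 a))"
        by (rule emeasure_eq_ennreal_measure) (use fPU[of "cball 0 b - cball 0 a"] bounded_subset[OF bounded_cball[of 0 b], of "cball 0 b - cball 0 a"] in auto)
      also have "measure PU (cball 0 b - cball 0 a) = measure PU (cball 0 b) - measure PU (cball 0 a)"
        by (rule measure_Diff) (use fPU[of "cball 0 b"] sPU that in auto)
      finally show ?thesis .
    qed
    have dN: "emeasure NU (cball 0 b - cball 0 a) = ennreal (measure NU (cball 0 b) - measure NU (cball 0 a))"
    proof -
      have "emeasure NU (cball 0 b - cball 0 a) = ennreal (measure NU (cball 0 b - cball 0 a))"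
        by (rule emeasure_eq_ennreal_measure) (use fNU[of "cball 0 b - cball 0 a"] bounded_subset[OF bounded_cball[of 0 b], of "cball 0 b - cball 0 a"] in auto)
      also have "measure NU (cball 0 b - cball 0 a) = measure NU (cball 0 b) - measure NU (cball 0 a)"
        by (rule measure_Diff) (use fNU[of "cball 0 b"] sNU that in auto)
      finally show ?thesis .
    qed
    have "emeasure Q {z. a < norm z \<and> norm z \<le> b} = emeasure PU (cball 0 b - cball 0 a) + emeasure NU (cball 0 b - cball 0 a)"
      unfolding set by (rule eQ) auto
    also have "\<dots> = ennreal ((measure PU (cball 0 b) - measure PU (cball 0 a)) + (measure NU (cball 0 b) - measure NU (cball 0 a)))"
      unfolding dP dN by (rule ennreal_plus[symmetric]) (use mP[OF that] mN[OF that] in auto)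
    also have "\<dots> = ennreal (F b - F a)" unfolding F by (simp add: algebra_simps)
    finally show ?thesis .
  qed
  have nm: "norm \<in> measurable Q borel" unfolding measurable_cong_sets[OF sQ refl] by measurable
  have IM: "interval_measure F = distr Q borel norm"
  proof (rule measure_eqI_generator_eq[where \<Omega>=UNIV and E="range (\<lambda>(a, b). {a<..b::real})"
        and A="\<lambda>i. {-real i<..real i}"])
    show "Int_stable (range (\<lambda>(a, b). {a<..b::real}))"
    proof (rule Int_stableI)
      fix X Y assume "X \<in> range (\<lambda>(a, b). {a<..b::real})" "Y \<in> range (\<lambda>(a, b). {a<..b::real})"
      then obtain a b c d where "X = {a<..b}" "Y = {c<..d}" by auto
      then have "X \<inter> Y = (\<lambda>(a, b). {a<..b}) (max a c, min b d)" by auto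
      then show "X \<inter> Y \<in> range (\<lambda>(a, b). {a<..b::real})" by blast
    qed
    show "range (\<lambda>(a, b). {a<..b::real}) \<subseteq> Pow UNIV" by simp
    show "sets (interval_measure F) = sigma_sets UNIV (range (\<lambda>(a, b). {a<..b::real}))"
      by (simp add: borel_sigma_sets_Ioc)
    show "sets (distr Q borel norm) = sigma_sets UNIV (range (\<lambda>(a, b). {a<..b::real}))"
      by (simp add: borel_sigma_sets_Ioc)
    show "range (\<lambda>i. {-real i<..real i}) \<subseteq> range (\<lambda>(a, b). {a<..b::real})" by auto
    show "(\<Union>i. {-real i<..real i}) = UNIV"
    proof (intro set_eqI iffI)
      fix x :: real
      obtain n :: nat where "\<bar>x\<bar> < real n" using reals_Archimedean2 by blast
      then have "x \<in> {-real n<..real n}" by auto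
      then show "x \<in> (\<Union>i. {-real i<..real i})" by blast
    qed auto
    show "emeasure (interval_measure F) {-real i<..real i} \<noteq> \<infinity>" for i
      using monoF rcF by (subst emeasure_interval_measure_Ioc) auto
    fix X assume "X \<in> range (\<lambda>(a, b). {a<..b::real})"
    then obtain a b where X: "X = {a<..b}" by auto
    show "emeasure (interval_measure F) X = emeasure (distr Q borel norm) X"
    proof (cases "a \<le> b")
      case True
      have "emeasure (distr Q borel norm) X = emeasure Q (norm -` X \<inter> space Q)"
        by (rule emeasure_distr[OF nm]) (use X in simp)
      also have "norm -` X \<inter> space Q = {z. a < norm z \<and> norm z \<le> b}"
        using sets_eq_imp_space_eq[OF sQ] X by auto
      also have "emeasure Q \<dots> = ennreal (F b - F a)" by (rule Ediff[OF True])
      finally show ?thesis using X True monoF rcF by (subst X, subst emeasure_interval_measure_Ioc) auto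
    next
      case False
      then have "X = {}" using X by auto
      then show ?thesis by simp
    qed
  qed
  define g where "g t = indicator {1..} t * ennreal (t powr - s)" for t :: real
  have gm[measurable]: "g \<in> borel_measurable borel" unfolding g_def[abs_def] by measurable
  have "(\<integral>\<^sup>+ t. g t \<partial>interval_measure F) < \<infinity>"
    using conv unfolding convergence_class_def g_def F_def PU_def NU_def .
  moreover have "(\<integral>\<^sup>+ t. g t \<partial>interval_measure F) = (\<integral>\<^sup>+ z. g (norm z) \<partial>Q)"
    unfolding IM by (rule nn_integral_distr[OF nm]) simp
  moreover have "(\<integral>\<^sup>+ z. g (norm z) \<partial>PU) \<le> (\<integral>\<^sup>+ z. g (norm z) \<partial>Q)"
  proof (rule nn_integral_mono_measure)
    show "sets PU = sets Q" using sPU sQ by simp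
    have sPQ: "sets PU = sets Q" using sPU sQ by simp
    show "PU \<le> Q"
    proof (subst le_measure[OF sPQ], intro ballI)
      fix A assume "A \<in> sets PU"
      then have A: "A \<in> sets borel" unfolding sPU .
      show "emeasure PU A \<le> emeasure Q A" unfolding eQ[OF A] by (rule add_increasing2) auto
    qed
  qed
  moreover have "(\<integral>\<^sup>+ z. g (norm z) \<partial>PU) = (\<integral>\<^sup>+ z. indicator Cup z * g (norm z) \<partial>P)"
    unfolding PU_def restr_up_def using sP
    by (intro nn_integral_density) (unfold measurable_cong_sets[OF sP refl], measurable)+
  ultimately have "(\<integral>\<^sup>+ z. indicator Cup z * g (norm z) \<partial>P) < \<infinity>" by simp
  then show ?thesis unfolding g_def .
qed

lemma powr_neg_Suc:
  fixes x :: real assumes "x > 0"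
  shows "x powr - (real q + 1) = 1 / x ^ (q + 1)"
proof -
  have e: "- (real q + 1) = - real (q + 1)" by simp
  have "x powr - (real q + 1) = inverse (x powr (real (q + 1)))"
    by (simp only: e powr_minus)
  also have "x powr (real (q + 1)) = x ^ (q + 1)" using assms by (rule powr_realpow)
  finally show ?thesis by (simp add: divide_inverse)
qed

lemma far_integrable:
  fixes P :: "complex measure"
  assumes sP: "sets P = sets borel"
    and fP: "\<And>B. B \<in> sets borel \<Longrightarrow> bounded B \<Longrightarrow> emeasure P B < \<infinity>"
    and nn: "(\<integral>\<^sup>+ z. indicator Cup z * (indicator {1..} (norm z) * ennreal (norm z powr - (real q + 1))) \<partial>P) < \<infinity>"
    and rho: "\<rho> > 0"
  shows "integrable P (\<lambda>z. indicator Cup z * indicator {z. \<rho> \<le> norm z} z * (1 / norm z ^ (q + 1)))"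
proof (rule integrableI_bounded)
  have [measurable]: "{z::complex. \<rho> \<le> norm z} \<in> sets borel" by measurable
  show "(\<lambda>z. indicator Cup z * indicator {z. \<rho> \<le> norm z} z * (1 / norm z ^ (q + 1))) \<in> borel_measurable P"
    unfolding measurable_cong_sets[OF sP refl] by measurable
  define c where "c = 1 / \<rho> ^ (q + 1)"
  have c0: "0 \<le> c" using rho by (simp add: c_def)
  have "(\<integral>\<^sup>+ z. ennreal (norm (indicator Cup z * indicator {z. \<rho> \<le> norm z} z * (1 / norm z ^ (q + 1)))) \<partial>P)
     \<le> (\<integral>\<^sup>+ z. indicator Cup z * (indicator {1..} (norm z) * ennreal (norm z powr - (real q + 1))) + ennreal c * indicator (cball 0 1) z \<partial>P)"
  proof (intro nn_integral_mono)
    fix z :: complex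
    show "ennreal (norm (indicator Cup z * indicator {z. \<rho> \<le> norm z} z * (1 / norm z ^ (q + 1))))
       \<le> indicator Cup z * (indicator {1..} (norm z) * ennreal (norm z powr - (real q + 1))) + ennreal c * indicator (cball 0 1) z"
    proof (cases "z \<in> Cup \<and> \<rho> \<le> norm z")
      case True
      then have zp: "norm z > 0" using rho by auto
      show ?thesis
      proof (cases "1 \<le> norm z")
        case True2: True
        have "ennreal (norm (indicator Cup z * indicator {z. \<rho> \<le> norm z} z * (1 / norm z ^ (q + 1))))
              = ennreal (1 / norm z ^ (q + 1))"
          using True zp by simp
        also have "\<dots> = ennreal (norm z powr - (real q + 1))"
          by (simp only: powr_neg_Suc[OF zp])
        finally have "ennreal (norm (indicator Cup z * indicator {z. \<rho> \<le> norm z} z * (1 / norm z ^ (q + 1))))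
              = ennreal (norm z powr - (real q + 1))" .
        then show ?thesis using True True2 by simp
      next
        case False
        have "1 / norm z ^ (q + 1) \<le> c"
          unfolding c_def using True rho zp by (intro divide_left_mono power_mono mult_pos_pos zero_less_power) auto
        then have "ennreal (norm (indicator Cup z * indicator {z. \<rho> \<le> norm z} z * (1 / norm z ^ (q + 1)))) \<le> ennreal c"
          using True by (intro ennreal_leI) simp
        then show ?thesis using False
          by (simp add: indicator_def add_increasing)
      qed
    next
      case False
      then show ?thesis by (auto simp: indicator_def)
    qed
  qed
  also have "\<dots> = (\<integral>\<^sup>+ z. indicator Cup z * (indicator {1..} (norm z) * ennreal (norm z powr - (real q + 1))) \<partial>P)
              + ennreal c * emeasure P (cball 0 1)"
  proof -
    have m1: "(\<lambda>z. indicator Cup z * (indicator {1..} (norm z) * ennreal (norm z powr - (real q + 1))) :: ennreal) \<in> borel_measurable P"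
      unfolding measurable_cong_sets[OF sP refl] by measurable
    have m2: "(\<lambda>z. ennreal c * indicator (cball 0 1) z :: ennreal) \<in> borel_measurable P"
      unfolding measurable_cong_sets[OF sP refl] by measurable
    have cb: "cball 0 1 \<in> sets P" unfolding sP by (rule cball_borel_c)
    show ?thesis by (simp only: nn_integral_add[OF m1 m2] nn_integral_cmult_indicator[OF cb])
  qed
  also have "\<dots> < \<infinity>"
    using nn fP[OF cball_borel_c bounded_cball, of 1]
    by (simp add: ennreal_add_less_top ennreal_mult_less_top)
  finally show "(\<integral>\<^sup>+ z. ennreal (norm (indicator Cup z * indicator {z. \<rho> \<le> norm z} z * (1 / norm z ^ (q + 1)))) \<partial>P) < \<infinity>" .
qed

lemma G_nonneg:
  assumes "R \<ge> 0" shows "0 \<le> G q R z"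
proof -
  have "0 \<le> (\<Sum>k=1..q. \<bar>Im (inverse (z^k))\<bar> * R^k)" using assms by (intro sum_nonneg mult_nonneg_nonneg) auto
  then have b: "0 \<le> 1 + 2/pi * (\<Sum>k=1..q. \<bar>Im (inverse (z^k))\<bar> * R^k)" by (intro add_nonneg_nonneg mult_nonneg_nonneg) auto
  have a: "0 \<le> 4/pi * R^(q+1) / norm z^(q+1)" using assms by simp
  show ?thesis unfolding G_def using a b by (simp only: split: if_split) blast
qed

lemma G_integrable:
  fixes P :: "complex measure"
  assumes sP: "sets P = sets borel"
    and fP: "\<And>B. B \<in> sets borel \<Longrightarrow> bounded B \<Longrightarrow> emeasure P B < \<infinity>"
    and far: "\<And>\<rho>. \<rho> > 0 \<Longrightarrow> integrable P (\<lambda>z. indicator Cup z * indicator {z. \<rho> \<le> norm z} z * (1 / norm z ^ (q + 1)))"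
    and r0: "r0 > 0"
    and loc: "\<forall>k\<in>{1..q}. set_integrable P (ball 0 r0 \<inter> Cup) (\<lambda>z. Im (inverse (z ^ k)))"
    and R: "R > 0"
  shows "integrable P (\<lambda>z. indicator Cup z * G q R z)"
proof -
  define C1 where "C1 = 4/pi * R^(q+1)"
  define C2 where "C2 = 1 + 2/pi * (\<Sum>k=1..q. inverse (r0 ^ k) * R^k)"
  define H where "H z = C1 * (indicator Cup z * indicator {z. 2 * R \<le> norm z} z * (1 / norm z ^ (q + 1)))
     + C2 * indicator (cball 0 (2 * R)) z
     + 2/pi * (\<Sum>k=1..q. R^k * \<bar>indicator (ball 0 r0 \<inter> Cup) z *\<^sub>R Im (inverse (z ^ k))\<bar>)" for z
  have [measurable]: "{z::complex. 2 * R \<le> norm z} \<in> sets borel" by measurable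
  have [measurable]: "ball (0::complex) r0 \<inter> Cup \<in> sets borel" by measurable
  have HI: "integrable P H"
    unfolding H_def
  proof (intro Bochner_Integration.integrable_add Bochner_Integration.integrable_mult_right Bochner_Integration.integrable_sum Bochner_Integration.integrable_abs)
    show "integrable P (\<lambda>z. indicator Cup z * indicator {z. 2 * R \<le> norm z} z * (1 / norm z ^ (q + 1)))"
      using far[of "2 * R"] R by simp
    show "integrable P (indicator (cball 0 (2 * R)) :: complex \<Rightarrow> real)"
      using fP[OF cball_borel_c bounded_cball, of "2 * R"] sP by (intro integrable_real_indicator) (simp_all only: sP cball_borel_c)
    show "integrable P (\<lambda>x. indicator (ball 0 r0 \<inter> Cup) x *\<^sub>R Im (inverse (x ^ k)))" if "k \<in> {1..q}" for k
      using loc that unfolding set_integrable_def by blast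
  qed
  have GM: "(\<lambda>z. indicator Cup z * G q R z) \<in> borel_measurable P"
    unfolding measurable_cong_sets[OF sP refl] G_def by measurable
  have AEb: "AE z in P. norm (indicator Cup z * G q R z) \<le> norm (H z)"
  proof (intro AE_I2)
    fix z :: complex
    have C10: "0 \<le> C1" unfolding C1_def using R by simp
    have C20: "0 \<le> C2" unfolding C2_def using R r0 by (intro add_nonneg_nonneg mult_nonneg_nonneg sum_nonneg) auto
    have S0: "0 \<le> (\<Sum>k=1..q. R^k * \<bar>indicator (ball 0 r0 \<inter> Cup) z *\<^sub>R Im (inverse (z ^ k))\<bar>)"
      using R by (intro sum_nonneg) auto
    have H0: "0 \<le> H z" unfolding H_def using C10 C20 S0 by (intro add_nonneg_nonneg mult_nonneg_nonneg) auto
    have "indicator Cup z * G q R z \<le> H z"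
    proof (cases "z \<in> Cup")
      case False then show ?thesis using H0 by simp
    next
      case zC: True
      show ?thesis
      proof (cases "2 * R \<le> norm z")
        case True
        have "indicator Cup z * G q R z = C1 * (indicator Cup z * indicator {z. 2 * R \<le> norm z} z * (1 / norm z ^ (q + 1)))"
          using zC True by (simp add: G_def C1_def)
        also have "\<dots> \<le> H z" unfolding H_def using C20 S0 by simp
        finally show ?thesis .
      next
        case False
        have k: "\<bar>Im (inverse (z ^ k))\<bar> \<le> \<bar>indicator (ball 0 r0 \<inter> Cup) z *\<^sub>R Im (inverse (z ^ k))\<bar> + inverse (r0 ^ k)" for k
        proof (cases "z \<in> ball 0 r0")
          case True then show ?thesis using zC r0 by simp
        next
          case False
          then have zr: "r0 \<le> norm z" by simp
          have "\<bar>Im (inverse (z ^ k))\<bar> \<le> norm (inverse (z ^ k))" by (rule abs_Im_le_cmod)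
          also have "\<dots> = inverse (norm z ^ k)" by (simp add: norm_inverse norm_power)
          also have "\<dots> \<le> inverse (r0 ^ k)" using zr r0 by (intro le_imp_inverse_le power_mono) auto
          finally show ?thesis using False by (simp add: indicator_def)
        qed
        have "(\<Sum>k=1..q. \<bar>Im (inverse (z^k))\<bar> * R^k)
              \<le> (\<Sum>k=1..q. (\<bar>indicator (ball 0 r0 \<inter> Cup) z *\<^sub>R Im (inverse (z ^ k))\<bar> + inverse (r0 ^ k)) * R^k)"
          using k R by (intro sum_mono mult_right_mono) auto
        also have "\<dots> = (\<Sum>k=1..q. R^k * \<bar>indicator (ball 0 r0 \<inter> Cup) z *\<^sub>R Im (inverse (z ^ k))\<bar>)
                       + (\<Sum>k=1..q. inverse (r0 ^ k) * R^k)"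
          by (simp add: sum.distrib algebra_simps)
        finally have ss: "(\<Sum>k=1..q. \<bar>Im (inverse (z^k))\<bar> * R^k)
              \<le> (\<Sum>k=1..q. R^k * \<bar>indicator (ball 0 r0 \<inter> Cup) z *\<^sub>R Im (inverse (z ^ k))\<bar>)
                       + (\<Sum>k=1..q. inverse (r0 ^ k) * R^k)" .
        have "indicator Cup z * G q R z = 1 + 2/pi * (\<Sum>k=1..q. \<bar>Im (inverse (z^k))\<bar> * R^k)"
          using zC False by (simp add: G_def)
        also have "\<dots> \<le> 1 + 2/pi * ((\<Sum>k=1..q. R^k * \<bar>indicator (ball 0 r0 \<inter> Cup) z *\<^sub>R Im (inverse (z ^ k))\<bar>)
                       + (\<Sum>k=1..q. inverse (r0 ^ k) * R^k))"
          using ss by (intro add_left_mono mult_left_mono) auto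
        also have "\<dots> = C2 + 2/pi * (\<Sum>k=1..q. R^k * \<bar>indicator (ball 0 r0 \<inter> Cup) z *\<^sub>R Im (inverse (z ^ k))\<bar>)"
          unfolding C2_def by (simp add: algebra_simps)
        also have "\<dots> \<le> H z"
          unfolding H_def using False C10 by (simp add: indicator_def)
        finally show ?thesis .
      qed
    qed
    moreover have "0 \<le> indicator Cup z * G q R z"
      using G_nonneg[of R q z] R by simp
    ultimately show "norm (indicator Cup z * G q R z) \<le> norm (H z)" using H0 by simp
  qed
  show ?thesis by (rule Bochner_Integration.integrable_bound[OF HI GM AEb])
qed

lemma w_meas[measurable]:
  assumes [measurable]: "f \<in> borel_measurable M" "g \<in> borel_measurable M"
  shows "(\<lambda>x. w q (f x) (g x)) \<in> borel_measurable M"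
  unfolding w_def by measurable

definition SB :: "complex set \<Rightarrow> real set" where "SB B = {t. complex_of_real t \<in> B}"

lemma SB_borel[measurable]: "B \<in> sets borel \<Longrightarrow> SB B \<in> sets borel"
proof -
  assume B: "B \<in> sets borel"
  have m: "(complex_of_real :: real \<Rightarrow> complex) \<in> borel_measurable borel"
    by (rule borel_measurable_continuous_onI) (intro continuous_intros)
  have "complex_of_real -` B \<inter> space borel \<in> sets borel" by (rule measurable_sets[OF m B])
  moreover have "complex_of_real -` B \<inter> space borel = SB B" by (auto simp: SB_def)
  ultimately show ?thesis by simp
qed

lemma SB_sub: "B \<subseteq> cball 0 R \<Longrightarrow> SB B \<subseteq> {-R..R}"
  unfolding SB_def by (auto simp: subset_iff abs_le_iff)

lemma cont_setint:
  fixes f :: "real \<Rightarrow> real"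
  assumes "\<And>t. isCont f t" "S \<in> sets borel" "S \<subseteq> {-R..R}"
  shows "integrable lborel (\<lambda>t. indicator S t * f t)"
proof -
  have "integrable lborel (\<lambda>t. f t * indicator {-R..R} t)"
    by (rule borel_integrable_atLeastAtMost) (use assms in auto)
  then have I: "integrable lborel (\<lambda>t. indicator S t *\<^sub>R (f t * indicator {-R..R} t))"
    by (rule integrable_mult_indicator[rotated]) (use assms in simp)
  have eq: "(\<lambda>t. indicator S t *\<^sub>R (f t * indicator {-R..R} t)) = (\<lambda>t. indicator S t * f t)"
    using assms(3) by (auto simp: indicator_def fun_eq_iff)
  show ?thesis using I unfolding eq .
qed

lemma alg1: "(i::real) * ((1/pi) * (a + (\<Sum>k\<in>K. c k * t ^ (k - 1))))
   = (1/pi) * (i * a + (\<Sum>k\<in>K. c k * (i * t ^ (k - 1))))"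
  by (simp add: sum_distrib_left algebra_simps)

lemma Omega_eq:
  assumes z: "Im z > 0" and B: "B \<in> sets borel" "B \<subseteq> cball 0 R"
  shows "Omega q z B = (\<integral>t. indicator (SB B) t * w q z t \<partial>lborel)"
proof -
  have S: "SB B \<in> sets borel" "SB B \<subseteq> {-R..R}" using SB_borel[OF B(1)] SB_sub[OF B(2)] by auto
  have ne: "complex_of_real t - z \<noteq> 0" for t using z by (auto simp: complex_eq_iff)
  have i0: "integrable lborel (\<lambda>t. indicator (SB B) t * Im (1 / (complex_of_real t - z)))"
    by (rule cont_setint[OF _ S]) (use ne in \<open>auto intro!: continuous_intros\<close>)
  have ik: "integrable lborel (\<lambda>t. indicator (SB B) t * t ^ (k - 1))" for k
    by (rule cont_setint[OF _ S]) (intro continuous_intros)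
  have ick: "integrable lborel (\<lambda>t. Im (inverse (z ^ k)) * (indicator (SB B) t * t ^ (k - 1)))" for k
    by (rule Bochner_Integration.integrable_mult_right) (rule ik)
  have isum: "integrable lborel (\<lambda>t. \<Sum>k=1..q. Im (inverse (z ^ k)) * (indicator (SB B) t * t ^ (k - 1)))"
    by (rule Bochner_Integration.integrable_sum) (rule ick)
  have "(\<integral>t. indicator (SB B) t * w q z t \<partial>lborel)
      = (\<integral>t. (1/pi) * (indicator (SB B) t * Im (1 / (complex_of_real t - z))
          + (\<Sum>k=1..q. Im (inverse (z ^ k)) * (indicator (SB B) t * t ^ (k - 1)))) \<partial>lborel)"
    unfolding w_def by (simp only: alg1)
  also have "\<dots> = (1/pi) * ((\<integral>t. indicator (SB B) t * Im (1 / (complex_of_real t - z)) \<partial>lborel)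
          + (\<Sum>k=1..q. Im (inverse (z ^ k)) * (\<integral>t. indicator (SB B) t * t ^ (k - 1) \<partial>lborel)))"
    by (simp only: integral_mult_right_zero Bochner_Integration.integral_add[OF i0 isum]
          Bochner_Integration.integral_sum[OF ick])
  also have "\<dots> = Omega q z B"
    unfolding Omega_def set_lebesgue_integral_def SB_def real_scaleR_def by (simp only: distrib_left)
  finally show ?thesis ..
qed

lemma sigma_finite_P:
  fixes P :: "complex measure"
  assumes "sets P = sets borel" "\<And>B. B \<in> sets borel \<Longrightarrow> bounded B \<Longrightarrow> emeasure P B < \<infinity>"
  shows "sigma_finite_measure P"
  by (rule sigma_finite_complex[OF assms])

definition FR :: "nat \<Rightarrow> real set \<Rightarrow> complex \<Rightarrow> real \<Rightarrow> real" where
  "FR q S z t = indicator Cup z * (indicator S t * w q z t)"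

lemma FR_meas:
  assumes sP: "sets P = sets borel" and S[measurable]: "S \<in> sets borel"
  shows "case_prod (FR q S) \<in> borel_measurable (P \<Otimes>\<^sub>M lborel)"
proof -
  have e: "case_prod (FR q S) = (\<lambda>x. indicator Cup (fst x) * (indicator S (snd x) * w q (fst x) (snd x)))"
    by (auto simp: FR_def fun_eq_iff split_beta)
  show ?thesis
    unfolding e measurable_cong_sets[OF sets_pair_measure_cong[OF sP refl] refl] by measurable
qed

lemma prod_int:
  fixes P :: "complex measure"
  assumes sP: "sets P = sets borel"
    and fP: "\<And>B. B \<in> sets borel \<Longrightarrow> bounded B \<Longrightarrow> emeasure P B < \<infinity>"
    and GI: "integrable P (\<lambda>z. indicator Cup z * G q R z)" and R: "R > 0"
  shows "integrable (P \<Otimes>\<^sub>M lborel) (case_prod (FR q {-R..R}))"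
proof (rule integrableI_bounded)
  show m: "case_prod (FR q {-R..R}) \<in> borel_measurable (P \<Otimes>\<^sub>M lborel)"
    by (rule FR_meas[OF sP]) simp
  have mn: "(\<lambda>x. ennreal (norm (case_prod (FR q {-R..R}) x))) \<in> borel_measurable (P \<Otimes>\<^sub>M lborel)"
    using m by measurable
  have "(\<integral>\<^sup>+ x. ennreal (norm (case_prod (FR q {-R..R}) x)) \<partial>(P \<Otimes>\<^sub>M lborel))
      = (\<integral>\<^sup>+ z. \<integral>\<^sup>+ t. ennreal (norm (FR q {-R..R} z t)) \<partial>lborel \<partial>P)"
    using lborel.nn_integral_fst[OF mn] by simp
  also have "\<dots> \<le> (\<integral>\<^sup>+ z. ennreal (norm (indicator Cup z * G q R z)) \<partial>P)"
  proof (intro nn_integral_mono)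
    fix z :: complex
    show "(\<integral>\<^sup>+ t. ennreal (norm (FR q {-R..R} z t)) \<partial>lborel) \<le> ennreal (norm (indicator Cup z * G q R z))"
    proof (cases "z \<in> Cup")
      case True
      then have "Im z > 0" by (simp add: Cup_def)
      have "(\<integral>\<^sup>+ t. ennreal (norm (FR q {-R..R} z t)) \<partial>lborel)
           = (\<integral>\<^sup>+ t. ennreal (indicator {-R..R} t * \<bar>w q z t\<bar>) \<partial>lborel)"
        using True by (intro nn_integral_cong) (simp add: FR_def abs_mult)
      also have "\<dots> \<le> ennreal (G q R z)" by (rule inner_bound[OF \<open>Im z > 0\<close> R])
      also have "G q R z = norm (indicator Cup z * G q R z)"
        using True G_nonneg[of R q z] R by simp
      finally show ?thesis .
    next
      case False
      then show ?thesis by (simp add: FR_def)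
    qed
  qed
  also have "\<dots> < \<infinity>" using GI by (simp add: integrable_iff_bounded)
  finally show "(\<integral>\<^sup>+ x. ennreal (norm (case_prod (FR q {-R..R}) x)) \<partial>(P \<Otimes>\<^sub>M lborel)) < \<infinity>" .
qed

lemma fubini_B:
  fixes P :: "complex measure"
  assumes sP: "sets P = sets borel"
    and fP: "\<And>B. B \<in> sets borel \<Longrightarrow> bounded B \<Longrightarrow> emeasure P B < \<infinity>"
    and GI: "integrable P (\<lambda>z. indicator Cup z * G q R z)" and R: "R > 0"
    and B: "B \<in> sets borel" "B \<subseteq> cball 0 R"
  shows "set_integrable P Cup (\<lambda>z. Omega q z B)"
    and "integrable lborel (\<lambda>t. indicator (SB B) t * (\<integral>z. indicator Cup z * w q z t \<partial>P))"
    and "(\<integral>t. indicator (SB B) t * (\<integral>z. indicator Cup z * w q z t \<partial>P) \<partial>lborel) = (LINT z:Cup|P. Omega q z B)"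
proof -
  interpret Pp: sigma_finite_measure P by (rule sigma_finite_P[OF sP fP])
  interpret pair_sigma_finite P lborel ..
  have S: "SB B \<in> sets borel" "SB B \<subseteq> {-R..R}" using SB_borel[OF B(1)] SB_sub[OF B(2)] by auto
  have IR: "integrable (P \<Otimes>\<^sub>M lborel) (case_prod (FR q {-R..R}))" by (rule prod_int[OF sP fP GI R])
  have "integrable (P \<Otimes>\<^sub>M lborel) (\<lambda>x. indicator (UNIV \<times> SB B) x *\<^sub>R case_prod (FR q {-R..R}) x)"
  proof (rule integrable_mult_indicator[OF _ IR])
    have "UNIV \<in> sets P" using sets.top[of P] sets_eq_imp_space_eq[OF sP] by simp
    then show "UNIV \<times> SB B \<in> sets (P \<Otimes>\<^sub>M lborel)" using S by (intro pair_measureI) auto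
  qed
  moreover have "indicator (UNIV \<times> SB B) x *\<^sub>R case_prod (FR q {-R..R}) x = case_prod (FR q (SB B)) x" for x
    using S(2) by (cases x) (auto simp: FR_def indicator_def)
  ultimately have IB: "integrable (P \<Otimes>\<^sub>M lborel) (case_prod (FR q (SB B)))" by simp
  have inner1: "(\<integral>t. FR q (SB B) z t \<partial>lborel) = indicator Cup z * Omega q z B" for z
  proof (cases "z \<in> Cup")
    case True
    then have "Im z > 0" by (simp add: Cup_def)
    then show ?thesis using True Omega_eq[OF \<open>Im z > 0\<close> B, of q] by (simp add: FR_def)
  next
    case False then show ?thesis by (simp add: FR_def)
  qed
  have inner2: "(\<integral>z. FR q (SB B) z t \<partial>P) = indicator (SB B) t * (\<integral>z. indicator Cup z * w q z t \<partial>P)" for t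
  proof -
    have "(\<integral>z. FR q (SB B) z t \<partial>P) = (\<integral>z. indicator (SB B) t * (indicator Cup z * w q z t) \<partial>P)"
      by (intro Bochner_Integration.integral_cong refl) (simp add: FR_def algebra_simps)
    then show ?thesis by simp
  qed
  have "integrable P (\<lambda>z. \<integral>t. FR q (SB B) z t \<partial>lborel)" by (rule integrable_fst[OF IB])
  then show "set_integrable P Cup (\<lambda>z. Omega q z B)"
    unfolding set_integrable_def inner1 by simp
  have "integrable lborel (\<lambda>t. \<integral>z. FR q (SB B) z t \<partial>P)" by (rule integrable_snd[OF IB])
  then show "integrable lborel (\<lambda>t. indicator (SB B) t * (\<integral>z. indicator Cup z * w q z t \<partial>P))"
    unfolding inner2 .
  have "(\<integral>t. (\<integral>z. FR q (SB B) z t \<partial>P) \<partial>lborel) = (\<integral>z. (\<integral>t. FR q (SB B) z t \<partial>lborel) \<partial>P)"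
    by (rule Fubini_integral[OF IB])
  then show "(\<integral>t. indicator (SB B) t * (\<integral>z. indicator Cup z * w q z t \<partial>P) \<partial>lborel) = (LINT z:Cup|P. Omega q z B)"
    unfolding inner1 inner2 set_lebesgue_integral_def by simp
qed

lemma emeasure_density_ind:
  assumes "sets M = sets borel" "A \<in> sets borel" "B \<in> sets borel"
  shows "emeasure (density M (indicator A)) B = emeasure M (B \<inter> A)"
proof -
  have m: "indicator A \<in> borel_measurable M"
    unfolding measurable_cong_sets[OF assms(1) refl] using assms(2) by measurable
  have B: "B \<in> sets M" using assms by simp
  have "emeasure (density M (indicator A)) B = (\<integral>\<^sup>+ x. indicator A x * indicator B x \<partial>M)"
    by (rule emeasure_density[OF m B])
  also have "\<dots> = (\<integral>\<^sup>+ x. indicator (B \<inter> A) x \<partial>M)"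
    by (intro nn_integral_cong) (auto simp: indicator_def)
  also have "\<dots> = emeasure M (B \<inter> A)"
    using assms by (intro nn_integral_indicator) auto
  finally show ?thesis .
qed

lemma cofreal_meas: "(complex_of_real :: real \<Rightarrow> complex) \<in> borel_measurable borel"
  by (rule borel_measurable_continuous_onI) (intro continuous_intros)

lemma emeasure_dens_line:
  fixes g :: "real \<Rightarrow> real"
  assumes g[measurable]: "g \<in> borel_measurable borel" and B: "B \<in> sets borel"
  shows "emeasure (density (distr lborel borel complex_of_real) (\<lambda>z. ennreal (g (Re z)))) B
       = (\<integral>\<^sup>+ t. ennreal (g t) * indicator (SB B) t \<partial>lborel)"
proof -
  have cm: "complex_of_real \<in> measurable lborel borel" using cofreal_meas by simp
  have "emeasure (density (distr lborel borel complex_of_real) (\<lambda>z. ennreal (g (Re z)))) B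
      = (\<integral>\<^sup>+ z. ennreal (g (Re z)) * indicator B z \<partial>distr lborel borel complex_of_real)"
    by (rule emeasure_density) (use B in auto)
  also have "\<dots> = (\<integral>\<^sup>+ t. ennreal (g (Re (complex_of_real t))) * indicator B (complex_of_real t) \<partial>lborel)"
    by (rule nn_integral_distr[OF cm]) (use B in simp)
  also have "\<dots> = (\<integral>\<^sup>+ t. ennreal (g t) * indicator (SB B) t \<partial>lborel)"
    by (intro nn_integral_cong) (simp add: SB_def indicator_def)
  finally show ?thesis .
qed

lemma conv_sym: "convergence_class P N s = convergence_class N P s"
proof -
  have "rad_tv P N = rad_tv N P" by (auto simp: rad_tv_def fun_eq_iff)
  then show ?thesis unfolding convergence_class_def by simp
qed

lemma fpar_meas:
  fixes P :: "complex measure"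
  assumes sP: "sets P = sets borel" and sf: "sigma_finite_measure P"
  shows "(\<lambda>t. \<integral>z. indicator Cup z * w q z t \<partial>P) \<in> borel_measurable borel"
proof -
  interpret sigma_finite_measure P by (rule sf)
  have e: "case_prod (\<lambda>t z. indicator Cup z * w q z t) = (\<lambda>x. indicator Cup (snd x) * w q (snd x) (fst x))"
    by (auto simp: fun_eq_iff split_beta)
  have "case_prod (\<lambda>t z. indicator Cup z * w q z t) \<in> borel_measurable (borel \<Otimes>\<^sub>M P)"
    unfolding e measurable_cong_sets[OF sets_pair_measure_cong[OF refl sP] refl] by measurable
  then show ?thesis by (rule borel_measurable_lebesgue_integral)
qed

lemma part1:
  fixes q :: nat and P N :: "complex measure"
  assumes nu: "charge P N"
    and loc: "\<exists>r0>0. \<forall>k\<in>{1..q}.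
                set_integrable P (ball 0 r0 \<inter> Cup) (\<lambda>z. Im (inverse (z ^ k))) \<and>
                set_integrable N (ball 0 r0 \<inter> Cup) (\<lambda>z. Im (inverse (z ^ k)))"
    and conv: "convergence_class (restr_up P) (restr_up N) (real q + 1)"
  shows "\<exists>P' N'. is_balayage q P N P' N'"
proof -
  have sP: "sets P = sets borel" and sN: "sets N = sets borel"
    and fP: "\<And>B. B \<in> sets borel \<Longrightarrow> bounded B \<Longrightarrow> emeasure P B < \<infinity>"
    and fN: "\<And>B. B \<in> sets borel \<Longrightarrow> bounded B \<Longrightarrow> emeasure N B < \<infinity>"
    using nu unfolding charge_def by auto
  have convs: "convergence_class (restr_up N) (restr_up P) (real q + 1)"
    using conv conv_sym by blast
  note nnP = conv_nn[OF sP sN fP fN conv]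
  note nnN = conv_nn[OF sN sP fN fP convs]
  obtain r0 where r0: "r0 > 0" and locPN: "\<forall>k\<in>{1..q}.
                set_integrable P (ball 0 r0 \<inter> Cup) (\<lambda>z. Im (inverse (z ^ k))) \<and>
                set_integrable N (ball 0 r0 \<inter> Cup) (\<lambda>z. Im (inverse (z ^ k)))"
    using loc by blast
  have locP: "\<forall>k\<in>{1..q}. set_integrable P (ball 0 r0 \<inter> Cup) (\<lambda>z. Im (inverse (z ^ k)))" using locPN by blast
  have locN: "\<forall>k\<in>{1..q}. set_integrable N (ball 0 r0 \<inter> Cup) (\<lambda>z. Im (inverse (z ^ k)))" using locPN by blast
  have GIP: "integrable P (\<lambda>z. indicator Cup z * G q R z)" if "R > 0" for R
    by (rule G_integrable[OF sP fP far_integrable[OF sP fP nnP] r0 locP that])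
  have GIN: "integrable N (\<lambda>z. indicator Cup z * G q R z)" if "R > 0" for R
    by (rule G_integrable[OF sN fN far_integrable[OF sN fN nnN] r0 locN that])
  define fp where "fp t = (\<integral>z. indicator Cup z * w q z t \<partial>P)" for t
  define fn where "fn t = (\<integral>z. indicator Cup z * w q z t \<partial>N)" for t
  define f where "f t = fp t - fn t" for t
  have fpm: "fp \<in> borel_measurable borel"
    unfolding fp_def[abs_def] by (rule fpar_meas[OF sP sigma_finite_P[OF sP fP]])
  have fnm: "fn \<in> borel_measurable borel"
    unfolding fn_def[abs_def] by (rule fpar_meas[OF sN sigma_finite_P[OF sN fN]])
  have fm[measurable]: "f \<in> borel_measurable borel" unfolding f_def[abs_def] using fpm fnm by measurable
  have key: "set_integrable P Cup (\<lambda>z. Omega q z B) \<and> set_integrable N Cup (\<lambda>z. Omega q z B)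
     \<and> integrable lborel (\<lambda>t. indicator (SB B) t * f t)
     \<and> (\<integral>t. indicator (SB B) t * f t \<partial>lborel) = (LINT z:Cup|P. Omega q z B) - (LINT z:Cup|N. Omega q z B)"
    if B: "B \<in> sets borel" "bounded B" for B
  proof -
    obtain R where R: "R > 0" "\<forall>x\<in>B. norm x \<le> R" using B(2) unfolding bounded_pos by blast
    then have BR: "B \<subseteq> cball 0 R" by auto
    note FP = fubini_B[OF sP fP GIP[OF R(1)] R(1) B(1) BR]
    note FN = fubini_B[OF sN fN GIN[OF R(1)] R(1) B(1) BR]
    have e: "(\<lambda>t. indicator (SB B) t * f t) = (\<lambda>t. indicator (SB B) t * fp t - indicator (SB B) t * fn t)"
      by (auto simp: f_def fun_eq_iff algebra_simps)
    have ip: "integrable lborel (\<lambda>t. indicator (SB B) t * fp t)" using FP(2) unfolding fp_def .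
    have in': "integrable lborel (\<lambda>t. indicator (SB B) t * fn t)" using FN(2) unfolding fn_def .
    have "integrable lborel (\<lambda>t. indicator (SB B) t * f t)"
      unfolding e by (rule Bochner_Integration.integrable_diff[OF ip in'])
    moreover have "(\<integral>t. indicator (SB B) t * f t \<partial>lborel) = (LINT z:Cup|P. Omega q z B) - (LINT z:Cup|N. Omega q z B)"
      unfolding e Bochner_Integration.integral_diff[OF ip in'] using FP(3) FN(3) unfolding fp_def fn_def by simp
    ultimately show ?thesis using FP(1) FN(1) by blast
  qed
  define LC where "LC = distr lborel borel (complex_of_real :: real \<Rightarrow> complex)"
  have sLC: "sets LC = sets borel" by (simp add: LC_def)
  define M1 where "M1 = addM (density P (indicator (- Cup))) (density LC (\<lambda>z. ennreal (f (Re z))))"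
  define M2 where "M2 = addM (density N (indicator (- Cup))) (density LC (\<lambda>z. ennreal (- f (Re z))))"
  have sM1: "sets M1 = sets borel" using sP by (simp add: M1_def)
  have sM2: "sets M2 = sets borel" using sN by (simp add: M2_def)
  have mf1: "(\<lambda>t. - f t) \<in> borel_measurable borel" by measurable
  have eM1: "emeasure M1 B = emeasure P (B \<inter> - Cup) + (\<integral>\<^sup>+ t. ennreal (f t) * indicator (SB B) t \<partial>lborel)"
    if B: "B \<in> sets borel" for B
  proof -
    have "emeasure M1 B = emeasure (density P (indicator (- Cup))) B + emeasure (density LC (\<lambda>z. ennreal (f (Re z)))) B"
      unfolding M1_def by (rule emeasure_addM) (use sP sLC B in auto)
    also have "emeasure (density P (indicator (- Cup))) B = emeasure P (B \<inter> - Cup)"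
      by (rule emeasure_density_ind[OF sP _ B]) simp
    also have "emeasure (density LC (\<lambda>z. ennreal (f (Re z)))) B = (\<integral>\<^sup>+ t. ennreal (f t) * indicator (SB B) t \<partial>lborel)"
      unfolding LC_def by (rule emeasure_dens_line[OF fm B])
    finally show ?thesis .
  qed
  have eM2: "emeasure M2 B = emeasure N (B \<inter> - Cup) + (\<integral>\<^sup>+ t. ennreal (- f t) * indicator (SB B) t \<partial>lborel)"
    if B: "B \<in> sets borel" for B
  proof -
    have "emeasure M2 B = emeasure (density N (indicator (- Cup))) B + emeasure (density LC (\<lambda>z. ennreal (- f (Re z)))) B"
      unfolding M2_def by (rule emeasure_addM) (use sN sLC B in auto)
    also have "emeasure (density N (indicator (- Cup))) B = emeasure N (B \<inter> - Cup)"
      by (rule emeasure_density_ind[OF sN _ B]) simp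
    also have "emeasure (density LC (\<lambda>z. ennreal (- f (Re z)))) B = (\<integral>\<^sup>+ t. ennreal (- f t) * indicator (SB B) t \<partial>lborel)"
      unfolding LC_def by (rule emeasure_dens_line[OF mf1 B])
    finally show ?thesis .
  qed
  have Ipos: "(\<integral>\<^sup>+ t. ennreal (f t) * indicator (SB B) t \<partial>lborel) = (\<integral>\<^sup>+ t. ennreal (indicator (SB B) t * f t) \<partial>lborel)" for B
    by (intro nn_integral_cong) (simp add: indicator_def)
  have Ineg: "(\<integral>\<^sup>+ t. ennreal (- f t) * indicator (SB B) t \<partial>lborel) = (\<integral>\<^sup>+ t. ennreal (- (indicator (SB B) t * f t)) \<partial>lborel)" for B
    by (intro nn_integral_cong) (simp add: indicator_def)
  have fin_int: "(\<integral>\<^sup>+ t. ennreal (h t) \<partial>lborel) < \<infinity>" if "integrable lborel h" for h :: "real \<Rightarrow> real"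
  proof -
    have "(\<integral>\<^sup>+ t. ennreal (h t) \<partial>lborel) \<le> (\<integral>\<^sup>+ t. ennreal (norm (h t)) \<partial>lborel)"
      by (intro nn_integral_mono ennreal_leI) simp
    also have "\<dots> < \<infinity>" using that by (simp add: integrable_iff_bounded)
    finally show ?thesis .
  qed
  have fin1: "(\<integral>\<^sup>+ t. ennreal (f t) * indicator (SB B) t \<partial>lborel) < \<infinity>"
    and fin2: "(\<integral>\<^sup>+ t. ennreal (- f t) * indicator (SB B) t \<partial>lborel) < \<infinity>"
    if "B \<in> sets borel" "bounded B" for B
  proof -
    have i: "integrable lborel (\<lambda>t. indicator (SB B) t * f t)" using key[OF that] by blast
    show "(\<integral>\<^sup>+ t. ennreal (f t) * indicator (SB B) t \<partial>lborel) < \<infinity>"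
      unfolding Ipos by (rule fin_int[OF i])
    have "integrable lborel (\<lambda>t. - (indicator (SB B) t * f t))" using i by simp
    then show "(\<integral>\<^sup>+ t. ennreal (- f t) * indicator (SB B) t \<partial>lborel) < \<infinity>"
      unfolding Ineg by (rule fin_int)
  qed
  have finP': "emeasure P (B \<inter> - Cup) < \<infinity>" "emeasure N (B \<inter> - Cup) < \<infinity>"
    if "B \<in> sets borel" "bounded B" for B
    using fP[of "B \<inter> - Cup"] fN[of "B \<inter> - Cup"] that by (auto simp: bounded_Int)
  have fM1: "emeasure M1 B < \<infinity>" if "B \<in> sets borel" "bounded B" for B
    unfolding eM1[OF that(1)] using finP'[OF that] fin1[OF that] by (simp add: ennreal_add_less_top)
  have fM2: "emeasure M2 B < \<infinity>" if "B \<in> sets borel" "bounded B" for B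
    unfolding eM2[OF that(1)] using finP'[OF that] fin2[OF that] by (simp add: ennreal_add_less_top)
  obtain P' N' where PN': "charge P' N'"
    and cv: "\<And>B. B \<in> sets borel \<Longrightarrow> bounded B \<Longrightarrow> charge_val P' N' B = measure M1 B - measure M2 B"
    using jordan_exists[OF sM1 sM2 fM1 fM2] by blast
  have "is_balayage q P N P' N'"
    unfolding is_balayage_def
  proof (intro conjI ballI impI PN')
    fix B :: "complex set" assume B: "B \<in> sets borel" "bounded B"
    note K = key[OF B]
    show "set_integrable P Cup (\<lambda>z. Omega q z B)" using K by blast
    show "set_integrable N Cup (\<lambda>z. Omega q z B)" using K by blast
    have i: "integrable lborel (\<lambda>t. indicator (SB B) t * f t)" using K by blast
    have m1: "measure M1 B = measure P (B \<inter> - Cup) + enn2real (\<integral>\<^sup>+ t. ennreal (indicator (SB B) t * f t) \<partial>lborel)"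
      unfolding measure_def eM1[OF B(1)] Ipos
      using finP'[OF B] fin1[OF B] unfolding Ipos by (simp add: enn2real_plus)
    have m2: "measure M2 B = measure N (B \<inter> - Cup) + enn2real (\<integral>\<^sup>+ t. ennreal (- (indicator (SB B) t * f t)) \<partial>lborel)"
      unfolding measure_def eM2[OF B(1)] Ineg
      using finP'[OF B] fin2[OF B] unfolding Ineg by (simp add: enn2real_plus)
    have int: "(\<integral>t. indicator (SB B) t * f t \<partial>lborel)
       = enn2real (\<integral>\<^sup>+ t. ennreal (indicator (SB B) t * f t) \<partial>lborel) - enn2real (\<integral>\<^sup>+ t. ennreal (- (indicator (SB B) t * f t)) \<partial>lborel)"
      by (rule real_lebesgue_integral_def[OF i])
    have bc: "B - Cup = B \<inter> - Cup" by auto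
    show "charge_val P' N' B = (LINT z:Cup|P. Omega q z B) - (LINT z:Cup|N. Omega q z B) + charge_val P N (B - Cup)"
    proof -
      have Keq: "(\<integral>t. indicator (SB B) t * f t \<partial>lborel) = (LINT z:Cup|P. Omega q z B) - (LINT z:Cup|N. Omega q z B)"
        using K by blast
      have c: "charge_val P' N' B = measure M1 B - measure M2 B" by (rule cv[OF B])
      show ?thesis using c m1 m2 Keq int unfolding charge_val_def bc by linarith
    qed
  qed
  then show ?thesis by blast
qed

lemma null_near0:
  fixes P N :: "complex measure"
  assumes sP: "sets P = sets borel" and sN: "sets N = sets borel"
    and supp: "ball 0 r0 \<inter> charge_support P N = {}" and r0: "r0 > 0"
  shows "emeasure P (cball 0 (r0/2)) = 0 \<and> emeasure N (cball 0 (r0/2)) = 0"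
proof -
  have "\<forall>z\<in>cball 0 (r0/2). \<exists>e>0. emeasure P (ball z e) = 0 \<and> emeasure N (ball z e) = 0"
  proof
    fix z :: complex assume "z \<in> cball 0 (r0/2)"
    then have "z \<in> ball 0 r0" using r0 by auto
    then have "z \<notin> charge_support P N" using supp by blast
    then obtain e where e: "e > 0" "\<not> (emeasure P (ball z e) + emeasure N (ball z e) > 0)"
      unfolding charge_support_def by auto
    then have "emeasure P (ball z e) + emeasure N (ball z e) = 0" by (simp add: not_gr_zero)
    then show "\<exists>e>0. emeasure P (ball z e) = 0 \<and> emeasure N (ball z e) = 0" using e(1) by auto
  qed
  from bchoice[OF this] obtain e where e0: "\<forall>z\<in>cball 0 (r0/2). e z > 0 \<and> emeasure P (ball z (e z)) = 0 \<and> emeasure N (ball z (e z)) = 0"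
    by blast
  then have e: "\<And>z. z \<in> cball 0 (r0/2) \<Longrightarrow> e z > 0 \<and> emeasure P (ball z (e z)) = 0 \<and> emeasure N (ball z (e z)) = 0"
    by blast
  have cov: "cball 0 (r0/2) \<subseteq> (\<Union>z\<in>cball 0 (r0/2). ball z (e z))"
  proof
    fix z assume z: "z \<in> cball (0::complex) (r0/2)"
    then have "z \<in> ball z (e z)" using e[OF z] by simp
    then show "z \<in> (\<Union>z\<in>cball 0 (r0/2). ball z (e z))" using z by blast
  qed
  have bo: "ball c (e c) \<in> sets borel" for c :: complex by (rule borel_open) simp
  have U: "(\<Union>c\<in>C. ball c (e c)) \<in> sets borel" for C :: "complex set" by (rule borel_open) auto
  obtain C where C: "C \<subseteq> cball 0 (r0/2)" "finite C" "cball 0 (r0/2) \<subseteq> (\<Union>c\<in>C. ball c (e c))"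
    using compactE_image[OF compact_cball _ cov] by blast
  have "emeasure P (cball 0 (r0/2)) \<le> emeasure P (\<Union>c\<in>C. ball c (e c))"
    by (rule emeasure_mono[OF C(3)]) (simp only: sP U)
  also have "\<dots> \<le> (\<Sum>c\<in>C. emeasure P (ball c (e c)))"
    by (rule emeasure_subadditive_finite[OF C(2)]) (unfold sP, use bo in blast)
  also have "\<dots> = 0" using e C(1) by (intro sum.neutral) auto
  finally have a: "emeasure P (cball 0 (r0/2)) = 0" by simp
  have "emeasure N (cball 0 (r0/2)) \<le> emeasure N (\<Union>c\<in>C. ball c (e c))"
    by (rule emeasure_mono[OF C(3)]) (simp only: sN U)
  also have "\<dots> \<le> (\<Sum>c\<in>C. emeasure N (ball c (e c)))"
    by (rule emeasure_subadditive_finite[OF C(2)]) (unfold sN, use bo in blast)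
  also have "\<dots> = 0" using e C(1) by (intro sum.neutral) auto
  finally have b: "emeasure N (cball 0 (r0/2)) = 0" by simp
  show ?thesis using a b by simp
qed

lemma Omega_small:
  assumes z: "Im z > 0" and B: "B \<in> sets borel" "B \<subseteq> cball 0 t" and t: "t > 0" and zt: "2 * t \<le> norm z"
  shows "\<bar>Omega q z B\<bar> \<le> 4/pi * t^(q+1) / norm z^(q+1)"
proof -
  have S: "SB B \<in> sets borel" "SB B \<subseteq> {-t..t}" using SB_borel[OF B(1)] SB_sub[OF B(2)] by auto
  have z0: "z \<noteq> 0" using z by auto
  define c where "c = 2/pi * t^q / norm z^(q+1)"
  have c0: "0 \<le> c" unfolding c_def using t by simp
  have "\<bar>Omega q z B\<bar> = norm (\<integral>s. indicator (SB B) s * w q z s \<partial>lborel)"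
    using Omega_eq[OF z B] by simp
  also have "\<dots> \<le> (\<integral>s. norm (indicator (SB B) s * w q z s) \<partial>lborel)"
    by (rule integral_norm_bound)
  also have "\<dots> \<le> (\<integral>s. c * indicator {-t..t} s \<partial>lborel)"
  proof (rule integral_mono')
    show "integrable lborel (\<lambda>s. c * indicator {-t..t} s)" by (intro Bochner_Integration.integrable_mult_right integrable_real_indicator) (use t in auto)
    show "0 \<le> c * indicator {-t..t} s" for s using c0 by simp
    fix s :: real
    show "norm (indicator (SB B) s * w q z s) \<le> c * indicator {-t..t} s"
    proof (cases "s \<in> SB B")
      case True
      then have "s \<in> {-t..t}" using S(2) by blast
      then have st: "\<bar>s\<bar> \<le> t" by (simp add: abs_le_iff)
      then have "\<bar>s\<bar> \<le> norm z / 2" using zt by simp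
      from w_far[OF z0 this, of q] have "\<bar>w q z s\<bar> \<le> 2 / pi * \<bar>s\<bar> ^ q / norm z ^ (q + 1)" .
      also have "\<dots> \<le> c" unfolding c_def using st z0 by (intro divide_right_mono mult_left_mono power_mono) auto
      finally show ?thesis using True S(2) by auto
    next
      case False then show ?thesis using c0 by (simp add: indicator_def)
    qed
  qed
  also have "\<dots> = c * (2 * t)" using t by simp
  also have "\<dots> = 4/pi * t^(q+1) / norm z^(q+1)" unfolding c_def by (simp add: field_simps)
  finally show ?thesis .
qed

lemma hahn_parts:
  fixes P' N' :: "complex measure"
  assumes cP: "charge P' N'" and E: "E \<in> sets borel" "bounded E"
  shows "\<exists>A. A \<in> sets borel \<and> measure P' E = charge_val P' N' (E \<inter> A) \<and> measure N' E = - charge_val P' N' (E - A)"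
proof -
  have sP: "sets P' = sets borel" and sN: "sets N' = sets borel" using cP unfolding charge_def by auto
  obtain A where A: "A \<in> sets borel" "emeasure P' (- A) = 0" "emeasure N' A = 0"
    using cP unfolding charge_def by blast
  have cA: "- A \<in> sets borel" using sets.compl_sets[of A borel] A(1) by (simp add: Compl_eq_Diff_UNIV)
  have nP: "E - A \<in> null_sets P'"
    by (rule null_sets_subset[of "- A"]) (use A cA E sP in \<open>auto simp: null_sets_def\<close>)
  have nP2: "E \<inter> A \<in> null_sets N'"
    by (rule null_sets_subset[of A]) (use A E sN in \<open>auto simp: null_sets_def\<close>)
  have nN: "E - A \<in> null_sets P'" by (rule nP)
  have nN1: "E \<inter> A \<in> null_sets N'" by (rule nP2)
  have eP: "emeasure P' E = emeasure P' (E \<inter> A)"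
  proof -
    have "E = (E \<inter> A) \<union> (E - A)" by auto
    then have "emeasure P' E = emeasure P' ((E \<inter> A) \<union> (E - A))" by simp
    also have "\<dots> = emeasure P' (E \<inter> A)"
      by (rule emeasure_Un_null_set[OF _ nP]) (use A E sP in simp)
    finally show ?thesis .
  qed
  have eN: "emeasure N' E = emeasure N' (E - A)"
  proof -
    have "E = (E - A) \<union> (E \<inter> A)" by auto
    then have "emeasure N' E = emeasure N' ((E - A) \<union> (E \<inter> A))" by simp
    also have "\<dots> = emeasure N' (E - A)"
      by (rule emeasure_Un_null_set[OF _ nP2]) (use A E sN in simp)
    finally show ?thesis .
  qed
  have z1: "measure N' (E \<inter> A) = 0" using nP2 by (simp add: measure_def null_sets_def)
  have z2: "measure P' (E - A) = 0" using nP by (simp add: measure_def null_sets_def)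
  show ?thesis
  proof (intro exI conjI)
    show "A \<in> sets borel" by (rule A(1))
    show "measure P' E = charge_val P' N' (E \<inter> A)"
      unfolding charge_val_def using z1 eP by (simp add: measure_def)
    show "measure N' E = - charge_val P' N' (E - A)"
      unfolding charge_val_def using z2 eN by (simp add: measure_def)
  qed
qed

lemma LINT_bound:
  fixes P :: "complex measure"
  assumes sP: "sets P = sets borel"
    and null: "emeasure P (cball 0 \<rho>) = 0"
    and hP: "integrable P (\<lambda>z. indicator Cup z * indicator {z. \<rho> \<le> norm z} z * (1 / norm z ^ (q + 1)))"
    and t: "t > 0" "2 * t \<le> \<rho>"
    and B: "B \<in> sets borel" "B \<subseteq> cball 0 t"
  shows "\<bar>LINT z:Cup|P. Omega q z B\<bar>
         \<le> 4/pi * t^(q+1) * (\<integral>z. indicator Cup z * indicator {z. \<rho> \<le> norm z} z * (1 / norm z ^ (q + 1)) \<partial>P)"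
proof -
  define h where "h z = indicator Cup z * indicator {z. \<rho> \<le> norm z} z * (1 / norm z ^ (q + 1))" for z :: complex
  define K where "K = 4/pi * t^(q+1)"
  have K0: "0 \<le> K" unfolding K_def using t by simp
  have h0: "0 \<le> h z" for z unfolding h_def by (simp add: indicator_def)
  have cn: "cball 0 \<rho> \<in> null_sets P" using null sP by (simp add: null_sets_def)
  have "\<bar>LINT z:Cup|P. Omega q z B\<bar> = norm (\<integral>z. indicator Cup z *\<^sub>R Omega q z B \<partial>P)"
    unfolding set_lebesgue_integral_def by simp
  also have "\<dots> \<le> (\<integral>z. norm (indicator Cup z *\<^sub>R Omega q z B) \<partial>P)"
    by (rule integral_norm_bound)
  also have "\<dots> \<le> (\<integral>z. K * h z \<partial>P)"
  proof (rule integral_mono_AE')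
    have "integrable P h" using hP unfolding h_def[abs_def] .
    then show "integrable P (\<lambda>z. K * h z)" by (rule Bochner_Integration.integrable_mult_right)
    show "AE z in P. 0 \<le> K * h z" using K0 h0 by simp
    show "AE z in P. norm (indicator Cup z *\<^sub>R Omega q z B) \<le> K * h z"
      using AE_not_in[OF cn]
    proof (rule AE_mp, intro AE_I2 impI)
      fix z :: complex assume zn: "z \<notin> cball 0 \<rho>"
      show "norm (indicator Cup z *\<^sub>R Omega q z B) \<le> K * h z"
      proof (cases "z \<in> Cup")
        case True
        then have "Im z > 0" by (simp add: Cup_def)
        have zr: "\<rho> \<le> norm z" using zn by simp
        have "norm (indicator Cup z *\<^sub>R Omega q z B) = \<bar>Omega q z B\<bar>" using True by simp
        also have "\<dots> \<le> 4/pi * t^(q+1) / norm z^(q+1)"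
          by (rule Omega_small[OF \<open>Im z > 0\<close> B t(1)]) (use zr t in simp)
        also have "\<dots> = K * h z" unfolding K_def h_def using True zr by simp
        finally show ?thesis .
      next
        case False then show ?thesis using K0 h0 by simp
      qed
    qed
  qed
  also have "\<dots> = K * (\<integral>z. h z \<partial>P)" by simp
  finally show ?thesis unfolding K_def h_def .
qed

lemma part2:
  fixes q :: nat and P N P' N' :: "complex measure"
  assumes nu: "charge P N" and conv: "convergence_class (restr_up P) (restr_up N) (real q + 1)"
    and bal: "is_balayage q P N P' N'" and supp: "\<exists>r0>0. ball 0 r0 \<inter> charge_support P N = {}"
  shows "rad_tv P' N' \<in> O[at_right 0](\<lambda>t. t ^ (q + 1))"
proof -
  have sP: "sets P = sets borel" and sN: "sets N = sets borel"
    and fP: "\<And>B. B \<in> sets borel \<Longrightarrow> bounded B \<Longrightarrow> emeasure P B < \<infinity>"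
    and fN: "\<And>B. B \<in> sets borel \<Longrightarrow> bounded B \<Longrightarrow> emeasure N B < \<infinity>"
    using nu unfolding charge_def by auto
  have convs: "convergence_class (restr_up N) (restr_up P) (real q + 1)"
    using conv conv_sym by blast
  note nnP = conv_nn[OF sP sN fP fN conv]
  note nnN = conv_nn[OF sN sP fN fP convs]
  obtain r0 where r0: "r0 > 0" "ball 0 r0 \<inter> charge_support P N = {}" using supp by blast
  define \<rho> where "\<rho> = r0 / 2"
  have \<rho>: "\<rho> > 0" using r0 by (simp add: \<rho>_def)
  have nulls: "emeasure P (cball 0 \<rho>) = 0" "emeasure N (cball 0 \<rho>) = 0"
    using null_near0[OF sP sN r0(2) r0(1)] unfolding \<rho>_def by auto
  note hP = far_integrable[OF sP fP nnP \<rho>]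
  note hN = far_integrable[OF sN fN nnN \<rho>]
  define IP where "IP = (\<integral>z. indicator Cup z * indicator {z. \<rho> \<le> norm z} z * (1 / norm z ^ (q + 1)) \<partial>P)"
  define IN where "IN = (\<integral>z. indicator Cup z * indicator {z. \<rho> \<le> norm z} z * (1 / norm z ^ (q + 1)) \<partial>N)"
  define K where "K = 4/pi * (IP + IN)"
  have cP': "charge P' N'" using bal unfolding is_balayage_def by blast
  have balB: "charge_val P' N' B = (LINT z:Cup|P. Omega q z B) - (LINT z:Cup|N. Omega q z B) + charge_val P N (B - Cup)"
    if "B \<in> sets borel" "bounded B" for B
    using bal that unfolding is_balayage_def by blast
  have cvb: "\<bar>charge_val P' N' B\<bar> \<le> K * t^(q+1)"
    if t: "t > 0" "2 * t \<le> \<rho>" and B: "B \<in> sets borel" "B \<subseteq> cball 0 t" for t B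
  proof -
    have bB: "bounded B" using bounded_subset[OF bounded_cball B(2)] .
    have Bc: "B - Cup \<subseteq> cball 0 \<rho>" using B(2) t by auto
    have Bcs: "B - Cup \<in> sets borel" using B(1) by simp
    have zP: "measure P (B - Cup) = 0"
    proof -
      have "emeasure P (B - Cup) \<le> emeasure P (cball 0 \<rho>)"
        by (rule emeasure_mono[OF Bc]) (simp add: sP)
      then have "emeasure P (B - Cup) = 0" using nulls by simp
      then show ?thesis by (simp add: measure_def)
    qed
    have zN: "measure N (B - Cup) = 0"
    proof -
      have "emeasure N (B - Cup) \<le> emeasure N (cball 0 \<rho>)"
        by (rule emeasure_mono[OF Bc]) (simp add: sN)
      then have "emeasure N (B - Cup) = 0" using nulls by simp
      then show ?thesis by (simp add: measure_def)
    qed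
    have LP: "\<bar>LINT z:Cup|P. Omega q z B\<bar> \<le> 4/pi * t^(q+1) * IP"
      unfolding IP_def by (rule LINT_bound[OF sP nulls(1) hP t B])
    have LN: "\<bar>LINT z:Cup|N. Omega q z B\<bar> \<le> 4/pi * t^(q+1) * IN"
      unfolding IN_def by (rule LINT_bound[OF sN nulls(2) hN t B])
    have "charge_val P' N' B = (LINT z:Cup|P. Omega q z B) - (LINT z:Cup|N. Omega q z B)"
      using balB[OF B(1) bB] zP zN unfolding charge_val_def by simp
    then have "\<bar>charge_val P' N' B\<bar> \<le> 4/pi * t^(q+1) * IP + 4/pi * t^(q+1) * IN"
      using LP LN by linarith
    also have "\<dots> = K * t^(q+1)" unfolding K_def by (simp add: algebra_simps add_divide_distrib)
    finally show ?thesis .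
  qed
  have rb: "0 \<le> rad_tv P' N' t \<and> rad_tv P' N' t \<le> 2 * K * t^(q+1)" if t: "t > 0" "2 * t \<le> \<rho>" for t
  proof -
    have E: "cball (0::complex) t \<in> sets borel" "bounded (cball (0::complex) t)" by auto
    obtain A where A: "A \<in> sets borel" "measure P' (cball 0 t) = charge_val P' N' (cball 0 t \<inter> A)"
      "measure N' (cball 0 t) = - charge_val P' N' (cball 0 t - A)"
      using hahn_parts[OF cP' E] by blast
    have c1: "\<bar>charge_val P' N' (cball 0 t \<inter> A)\<bar> \<le> K * t^(q+1)"
      by (rule cvb[OF t]) (use A(1) in auto)
    have c2: "\<bar>charge_val P' N' (cball 0 t - A)\<bar> \<le> K * t^(q+1)"
      by (rule cvb[OF t]) (use A(1) in auto)
    have "rad_tv P' N' t = charge_val P' N' (cball 0 t \<inter> A) - charge_val P' N' (cball 0 t - A)"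
      unfolding rad_tv_def A(2) A(3) by simp
    then have "rad_tv P' N' t \<le> 2 * K * t^(q+1)" using c1 c2 by linarith
    moreover have "0 \<le> rad_tv P' N' t" unfolding rad_tv_def by simp
    ultimately show ?thesis by simp
  qed
  show ?thesis
  proof (rule bigoI[where c = "2 * K"])
    show "\<forall>\<^sub>F t in at_right 0. norm (rad_tv P' N' t) \<le> 2 * K * norm (t ^ (q + 1))"
      unfolding eventually_at_right_field
    proof (intro exI[of _ "\<rho> / 2"] conjI allI impI)
      show "(0::real) < \<rho> / 2" using \<rho> by simp
      fix y :: real assume y: "0 < y" "y < \<rho> / 2"
      then have "0 \<le> rad_tv P' N' y \<and> rad_tv P' N' y \<le> 2 * K * y^(q+1)" using rb[of y] by simp
      then show "norm (rad_tv P' N' y) \<le> 2 * K * norm (y ^ (q + 1))" using y by simp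
    qed
  qed
qed

theorem theorem1:
  fixes q :: nat and P N :: "complex measure"
  assumes nu: "charge P N"
    and loc: "\<exists>r0>0. \<forall>k\<in>{1..q}.
                set_integrable P (ball 0 r0 \<inter> Cup) (\<lambda>z. Im (inverse (z ^ k))) \<and>
                set_integrable N (ball 0 r0 \<inter> Cup) (\<lambda>z. Im (inverse (z ^ k)))"
    and conv: "convergence_class (restr_up P) (restr_up N) (real q + 1)"
  shows "(\<exists>P' N'. is_balayage q P N P' N') \<and>
         (\<forall>P' N'. is_balayage q P N P' N' \<longrightarrow>
            (\<exists>r0>0. ball 0 r0 \<inter> charge_support P N = {}) \<longrightarrow>
            rad_tv P' N' \<in> O[at_right 0](\<lambda>t. t ^ (q + 1)))"
  using part1[OF nu loc conv] part2[OF nu conv] by blast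

end
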